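(* Let $G$ be a finite group, $p$ a prime not dividing $|G|$, $m\ge1$, and let $M\neq\{0\}$ be a finite module over the group ring $(\mathbb{Z}/p^m\mathbb{Z})[G]$. Then: 1) if the exponent of $M$ is $p^k$ and every proper submodule of $M$ has exponent smaller than $p^k$, then a) $M$ is homogeneous, i.e. a direct sum of cyclic groups of order $p^k$; b) all layers $p^iM/p^{i+1}M$, $i\in\{0,\dots,k-1\}$, are isomorphic simple $G$-modules; c) every element of $G$ acting identically on the lowest layer acts identically on all of $M$; 2) if $M$ does not decompose nontrivially into a direct sum of submodules, then every proper submodule of $M$ has exponent smaller than that of $M$. *)

theory Defs
  imports "HOL-Algebra.Group" "HOL-Computational_Algebra.Primes"
begin

definition nsmul :: "nat \<Rightarrow> 'm::ab_group_add \<Rightarrow> 'm" where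
  "nsmul n x = (\<Sum>i<n. x)"

text \<open>A G-module structure on an abelian group (i.e. a module over the group ring Z[G]):
  G acts by additive maps, compatibly with the group law.\<close>
definition is_Gmodule :: "('g,'b) monoid_scheme \<Rightarrow> ('g \<Rightarrow> 'm::ab_group_add \<Rightarrow> 'm) \<Rightarrow> bool" where
  "is_Gmodule G act \<longleftrightarrow>
     (\<forall>g\<in>carrier G. \<forall>x y. act g (x + y) = act g x + act g y) \<and>
     (\<forall>x. act \<one>\<^bsub>G\<^esub> x = x) \<and>
     (\<forall>g\<in>carrier G. \<forall>h\<in>carrier G. \<forall>x. act (g \<otimes>\<^bsub>G\<^esub> h) x = act g (act h x))"

definition submod :: "('g,'b) monoid_scheme \<Rightarrow> ('g \<Rightarrow> 'm::ab_group_add \<Rightarrow> 'm) \<Rightarrow> 'm set \<Rightarrow> bool" where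
  "submod G act N \<longleftrightarrow> 0 \<in> N \<and> (\<forall>x\<in>N. \<forall>y\<in>N. x + y \<in> N) \<and> (\<forall>x\<in>N. - x \<in> N) \<and>
     (\<forall>g\<in>carrier G. \<forall>x\<in>N. act g x \<in> N)"

definition expo :: "'m::ab_group_add set \<Rightarrow> nat" where
  "expo S = (LEAST n. n > 0 \<and> (\<forall>x\<in>S. nsmul n x = 0))"

definition aord :: "'m::ab_group_add \<Rightarrow> nat" where
  "aord x = expo {x}"

text \<open>M is the (internal) direct sum of cyclic subgroups of order q.\<close>
definition homog :: "'m::ab_group_add set \<Rightarrow> nat \<Rightarrow> bool" where
  "homog M q \<longleftrightarrow> (\<exists>xs. set xs \<subseteq> M \<and> (\<forall>x\<in>set xs. aord x = q) \<and>
     (\<forall>y\<in>M. \<exists>!cs. length cs = length xs \<and> (\<forall>c\<in>set cs. c < q) \<and>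
        y = sum_list (map2 nsmul cs xs)))"

definition pM :: "nat \<Rightarrow> nat \<Rightarrow> 'm::ab_group_add set" where
  "pM p i = nsmul (p ^ i) ` UNIV"

definition coset :: "'m::ab_group_add \<Rightarrow> 'm set \<Rightarrow> 'm set" where
  "coset x B = (\<lambda>y. x + y) ` B"

definition quot :: "'m::ab_group_add set \<Rightarrow> 'm set \<Rightarrow> 'm set set" where
  "quot A B = (\<lambda>x. coset x B) ` A"

definition qadd :: "'m::ab_group_add set \<Rightarrow> 'm set \<Rightarrow> 'm set" where
  "qadd X Y = {x + y | x y. x \<in> X \<and> y \<in> Y}"

definition qiso :: "('g,'b) monoid_scheme \<Rightarrow> ('g \<Rightarrow> 'm::ab_group_add \<Rightarrow> 'm) \<Rightarrow>
    'm set \<Rightarrow> 'm set \<Rightarrow> 'm set \<Rightarrow> 'm set \<Rightarrow> bool" where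
  "qiso G act A B C D \<longleftrightarrow> (\<exists>\<phi>. bij_betw \<phi> (quot A B) (quot C D) \<and>
     (\<forall>X\<in>quot A B. \<forall>Y\<in>quot A B. \<phi> (qadd X Y) = qadd (\<phi> X) (\<phi> Y)) \<and>
     (\<forall>g\<in>carrier G. \<forall>X\<in>quot A B. \<phi> (act g ` X) = act g ` \<phi> X))"

definition qsimple :: "('g,'b) monoid_scheme \<Rightarrow> ('g \<Rightarrow> 'm::ab_group_add \<Rightarrow> 'm) \<Rightarrow>
    'm set \<Rightarrow> 'm set \<Rightarrow> bool" where
  "qsimple G act A B \<longleftrightarrow> (\<exists>X\<in>quot A B. X \<noteq> B) \<and>
     (\<forall>S \<subseteq> quot A B. B \<in> S \<and> (\<forall>X\<in>S. \<forall>Y\<in>S. qadd X Y \<in> S) \<and> (\<forall>X\<in>S. uminus ` X \<in> S) \<and>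
        (\<forall>g\<in>carrier G. \<forall>X\<in>S. act g ` X \<in> S) \<longrightarrow> S = {B} \<or> S = quot A B)"

definition decomposable :: "('g,'b) monoid_scheme \<Rightarrow> ('g \<Rightarrow> 'm::ab_group_add \<Rightarrow> 'm) \<Rightarrow> bool" where
  "decomposable G act \<longleftrightarrow> (\<exists>A B. submod G act A \<and> submod G act B \<and> A \<noteq> {0} \<and> B \<noteq> {0} \<and>
     A \<inter> B = {0} \<and> (\<forall>x. \<exists>a\<in>A. \<exists>b\<in>B. x = a + b))"

end

theory Submission
  imports Defs "HOL-Algebra.Multiplicative_Group"
begin


lemma ns0[simp]: "nsmul 0 x = 0" by (simp add: nsmul_def)
lemma nsSuc: "nsmul (Suc n) x = x + nsmul n x" by (simp add: nsmul_def add.commute)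
lemma ns1[simp]: "nsmul 1 x = x" by (simp add: nsmul_def)
lemma ns_Suc0[simp]: "nsmul (Suc 0) x = x" by (simp add: nsmul_def)
lemma ns_add: "nsmul (a + b) x = nsmul a x + nsmul b x"
  by (induction a) (simp_all add: nsSuc add.assoc)
lemma ns_zero[simp]: "nsmul n 0 = 0" by (simp add: nsmul_def)
lemma ns_plus: "nsmul n (x + y) = nsmul n x + nsmul n y"
  by (induction n) (simp_all add: nsSuc algebra_simps)
lemma ns_mult: "nsmul (a * b) x = nsmul a (nsmul b x)"
  by (induction a) (simp_all add: nsSuc ns_add ns_plus)
lemma ns_uminus: "nsmul n (- x) = - nsmul n x"
  by (induction n) (simp_all add: nsSuc algebra_simps)
lemma ns_diff: "nsmul n (x - y) = nsmul n x - nsmul n y"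
  by (metis diff_conv_add_uminus ns_plus ns_uminus)
lemma ns_sum: "nsmul n (sum f A) = sum (\<lambda>i. nsmul n (f i)) A"
  by (induction A rule: infinite_finite_induct) (simp_all add: ns_plus)
lemma ns_sum_left: "nsmul (sum f A) x = sum (\<lambda>i. nsmul (f i) x) A"
  by (induction A rule: infinite_finite_induct) (simp_all add: ns_add)
lemma ns_commute: "nsmul a (nsmul b x) = nsmul b (nsmul a x)"
  by (metis ns_mult mult.commute)

definition additive :: "('m::ab_group_add \<Rightarrow> 'm) \<Rightarrow> bool" where
  "additive f \<longleftrightarrow> (\<forall>x y. f (x + y) = f x + f y)"

lemma additive_0: "additive f \<Longrightarrow> f 0 = 0"
  unfolding additive_def by (metis add_cancel_right_right add_0)
lemma additive_uminus: "additive f \<Longrightarrow> f (- x) = - f x"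
  unfolding additive_def by (metis additive_0 additive_def add.right_inverse eq_neg_iff_add_eq_0)
lemma additive_diff: "additive f \<Longrightarrow> f (x - y) = f x - f y"
  by (metis additive_def additive_uminus diff_conv_add_uminus)
lemma additive_ns: "additive f \<Longrightarrow> f (nsmul n x) = nsmul n (f x)"
  by (induction n) (simp_all add: nsSuc additive_0 additive_def)
lemma additive_sum: "additive f \<Longrightarrow> f (sum g A) = sum (\<lambda>i. f (g i)) A"
  by (induction A rule: infinite_finite_induct) (simp_all add: additive_0 additive_def)

definition sg :: "'m::ab_group_add set \<Rightarrow> bool" where
  "sg A \<longleftrightarrow> 0 \<in> A \<and> (\<forall>x\<in>A. \<forall>y\<in>A. x + y \<in> A) \<and> (\<forall>x\<in>A. - x \<in> A)"

lemma sg_0: "sg A \<Longrightarrow> 0 \<in> A" by (simp add: sg_def)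
lemma sg_add: "sg A \<Longrightarrow> x \<in> A \<Longrightarrow> y \<in> A \<Longrightarrow> x + y \<in> A" by (simp add: sg_def)
lemma sg_uminus: "sg A \<Longrightarrow> x \<in> A \<Longrightarrow> - x \<in> A" by (simp add: sg_def)
lemma sg_diff: "sg A \<Longrightarrow> x \<in> A \<Longrightarrow> y \<in> A \<Longrightarrow> x - y \<in> A"
  by (metis diff_conv_add_uminus sg_add sg_uminus)
lemma sg_ns: "sg A \<Longrightarrow> x \<in> A \<Longrightarrow> nsmul n x \<in> A"
  by (induction n) (simp_all add: nsSuc sg_0 sg_add)
lemma sg_sum: "sg A \<Longrightarrow> (\<And>i. i \<in> I \<Longrightarrow> f i \<in> A) \<Longrightarrow> sum f I \<in> A"
  by (induction I rule: infinite_finite_induct) (simp_all add: sg_0 sg_add)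
lemma sg_diff_iff: "sg A \<Longrightarrow> y \<in> A \<Longrightarrow> (x - y \<in> A) = (x \<in> A)"
  by (metis diff_add_cancel sg_add sg_diff)
lemma sg_add_iff: "sg A \<Longrightarrow> y \<in> A \<Longrightarrow> (x + y \<in> A) = (x \<in> A)"
  by (metis add_diff_cancel sg_add sg_diff)

lemma submod_sg: "submod G act N \<Longrightarrow> sg N" by (simp add: submod_def sg_def)

lemma ns_gcd:
  assumes "nsmul a x = 0" "nsmul b x = 0" "a \<noteq> 0"
  shows "nsmul (gcd a b) x = 0"
proof -
  obtain s t where st: "a * s = b * t + gcd a b" using bezout_nat[OF assms(3)] by blast
  have "nsmul (a * s) x = 0" by (metis assms(1) mult.commute ns_mult ns_zero)
  moreover have "nsmul (b * t) x = 0" by (metis assms(2) mult.commute ns_mult ns_zero)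
  ultimately show ?thesis by (metis st ns_add add_0)
qed

locale Gm =
  fixes G :: "('g,'b) monoid_scheme" and act :: "'g \<Rightarrow> 'm::{ab_group_add,finite} \<Rightarrow> 'm"
    and p m :: nat
  assumes grp: "group G" and fin: "finite (carrier G)" and pr: "prime p"
    and ndvd: "\<not> p dvd card (carrier G)" and gm: "is_Gmodule G act"
    and kill: "\<And>x::'m. nsmul (p ^ m) x = 0"
begin

lemma act_additive: "g \<in> carrier G \<Longrightarrow> additive (act g)"
  using gm by (simp add: is_Gmodule_def additive_def)

lemma act_one: "act \<one>\<^bsub>G\<^esub> x = x" using gm by (simp add: is_Gmodule_def)
lemma act_mult: "g \<in> carrier G \<Longrightarrow> h \<in> carrier G \<Longrightarrow> act (g \<otimes>\<^bsub>G\<^esub> h) x = act g (act h x)"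
  using gm by (simp add: is_Gmodule_def)
lemma act_inv1: "g \<in> carrier G \<Longrightarrow> act (inv\<^bsub>G\<^esub> g) (act g x) = x"
  by (metis act_mult act_one grp group.inv_closed group.l_inv)
lemma act_inv2: "g \<in> carrier G \<Longrightarrow> act g (act (inv\<^bsub>G\<^esub> g) x) = x"
  by (metis act_mult act_one grp group.inv_closed group.r_inv)

lemma p_pos: "p > 0" using pr prime_gt_0_nat by blast
lemma p_gt1: "p > 1" using pr prime_gt_1_nat by blast


lemma neg_ns: "- nsmul a (x::'m) = nsmul ((p ^ m - 1) * a) x"
proof -
  have "(p ^ m - 1) * a + a = p ^ m * a" using p_pos
    by (simp add: diff_mult_distrib)
  hence "nsmul ((p ^ m - 1) * a) x + nsmul a x = nsmul (p ^ m * a) x"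
    by (metis ns_add)
  also have "\<dots> = 0" by (simp only: ns_mult kill)
  finally show ?thesis by (metis add.commute add_eq_0_iff2 neg_eq_iff_add_eq_0)
qed

lemma avg: "\<exists>u. \<forall>y::'m. nsmul (u * card (carrier G)) y = y"
proof -
  have cpos: "card (carrier G) \<noteq> 0"
    using fin grp group.is_monoid monoid.one_closed card_0_eq by blast
  have "coprime (card (carrier G)) p"
    using ndvd pr by (simp add: coprime_commute prime_imp_coprime)
  hence g1: "gcd (card (carrier G)) (p ^ m) = 1"
    by (simp add: coprime_power_right_iff)
  obtain s t where st: "card (carrier G) * s = p ^ m * t + 1"
    using bezout_nat[OF cpos, of "p ^ m"] g1 by auto
  have "\<forall>y::'m. nsmul (s * card (carrier G)) y = y"
  proof
    fix y :: 'm
    have "nsmul (s * card (carrier G)) y = nsmul (p ^ m * t) y + nsmul 1 y"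
      by (metis st mult.commute ns_add)
    also have "\<dots> = y" by (simp only: ns_mult kill ns_zero ns1 add_0)
    finally show "nsmul (s * card (carrier G)) y = y" .
  qed
  thus ?thesis by blast
qed

end



definition ss :: "'m::ab_group_add set \<Rightarrow> 'm set \<Rightarrow> 'm set" where
  "ss A B = {a + b | a b. a \<in> A \<and> b \<in> B}"

lemma ss_iff: "x \<in> ss A B \<longleftrightarrow> (\<exists>a\<in>A. \<exists>b\<in>B. x = a + b)"
  unfolding ss_def by blast

context Gm begin

lemma inv_mod_p:
  assumes "\<not> p dvd t"
  shows "\<exists>s r. s * t = p * r + 1"
proof -
  have t0: "t \<noteq> 0" using assms by (metis dvd_0_right)
  have "coprime t p" using assms pr by (simp add: coprime_commute prime_imp_coprime)
  hence "gcd t p = 1" by simp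
  then obtain s r where "t * s = p * r + 1" using bezout_nat[OF t0, of p] by auto
  thus ?thesis by (metis mult.commute)
qed

lemma AC:
  assumes W: "sg (W::'m set)" and KW: "K \<subseteq> W" and K: "sg K" and LK: "L \<subseteq> K" and L: "sg L"
    and H: "\<And>C y. sg C \<Longrightarrow> C \<subseteq> W \<Longrightarrow> L \<subseteq> C \<Longrightarrow> C \<inter> K \<subseteq> L \<Longrightarrow> y \<in> W \<Longrightarrow>
              nsmul p y \<in> ss C K \<Longrightarrow> \<exists>f\<in>K. nsmul p (y - f) \<in> C"
  shows "\<exists>C. sg C \<and> C \<subseteq> W \<and> L \<subseteq> C \<and> C \<inter> K \<subseteq> L \<and> W \<subseteq> ss C K"
proof -
  define CC where "CC = {C. sg C \<and> C \<subseteq> W \<and> L \<subseteq> C \<and> C \<inter> K \<subseteq> L}"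
  have "finite CC" by (rule finite_subset[of _ "Pow UNIV"]) auto
  moreover have "L \<in> CC" using L LK KW unfolding CC_def by auto
  ultimately obtain C where C: "C \<in> CC" and Cmax: "\<And>D. D \<in> CC \<Longrightarrow> C \<subseteq> D \<Longrightarrow> C = D"
    using finite_has_maximal[of CC] by blast
  have sgC: "sg C" and CW: "C \<subseteq> W" and LC: "L \<subseteq> C" and CK: "C \<inter> K \<subseteq> L"
    using C unfolding CC_def by auto
  have "W \<subseteq> ss C K"
  proof
    fix y0 assume y0: "y0 \<in> W"
    show "y0 \<in> ss C K"
    proof (rule ccontr)
      assume ny0: "y0 \<notin> ss C K"
      define P where "P j = (nsmul (p ^ j) y0 \<in> ss C K)" for j
      have Pm: "P m" unfolding P_def ss_iff using kill sg_0[OF sgC] sg_0[OF K] by force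
      define j where "j = (LEAST j. P j)"
      have Pj: "P j" unfolding j_def by (rule LeastI[of P m, OF Pm])
      have j0: "j \<noteq> 0" using Pj ny0 unfolding P_def by (metis ns1 power_0)
      define y where "y = nsmul (p ^ (j - 1)) y0"
      have yW: "y \<in> W" unfolding y_def using sg_ns[OF W y0] .
      have ny: "y \<notin> ss C K"
      proof
        assume "y \<in> ss C K"
        hence "P (j - 1)" unfolding P_def y_def .
        hence "j \<le> j - 1" unfolding j_def by (rule Least_le)
        thus False using j0 by simp
      qed
      have py: "nsmul p y \<in> ss C K"
      proof -
        have "nsmul p y = nsmul (p ^ j) y0" unfolding y_def
          using j0 by (metis ns_mult power_eq_if)
        thus ?thesis using Pj unfolding P_def by simp
      qed
      obtain f where fK: "f \<in> K" and pf: "nsmul p (y - f) \<in> C"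
        using H[OF sgC CW LC CK yW py] by blast
      define y' where "y' = y - f"
      have y'W: "y' \<in> W" unfolding y'_def using yW fK KW sg_diff[OF W] by auto
      have ny': "y' \<notin> ss C K"
      proof
        assume "y' \<in> ss C K"
        then obtain a b where "a \<in> C" "b \<in> K" "y' = a + b" unfolding ss_iff by blast
        hence "y = a + (b + f)" unfolding y'_def by (simp add: algebra_simps)
        thus False using ny \<open>a \<in> C\<close> sg_add[OF K \<open>b \<in> K\<close> fK] unfolding ss_iff by blast
      qed
      have py': "nsmul p y' \<in> C" using pf unfolding y'_def .
      define D where "D = {c + nsmul t y' | c t. c \<in> C}"
      have memD: "c \<in> C \<Longrightarrow> c + nsmul t y' \<in> D" for c t unfolding D_def by blast
      have sgD: "sg D"
        unfolding sg_def
      proof (intro conjI ballI)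
        show "0 \<in> D" using memD[OF sg_0[OF sgC], of 0] by simp
      next
        fix a b assume "a \<in> D" "b \<in> D"
        then obtain c1 t1 c2 t2 where "c1 \<in> C" "c2 \<in> C" "a = c1 + nsmul t1 y'" "b = c2 + nsmul t2 y'"
          unfolding D_def by blast
        hence "a + b = (c1 + c2) + nsmul (t1 + t2) y'" by (simp add: ns_add algebra_simps)
        thus "a + b \<in> D" using memD sg_add[OF sgC \<open>c1 \<in> C\<close> \<open>c2 \<in> C\<close>] by simp
      next
        fix a assume "a \<in> D"
        then obtain c t where "c \<in> C" "a = c + nsmul t y'" unfolding D_def by blast
        hence "- a = (- c) + (- nsmul t y')" by (simp add: algebra_simps)
        hence "- a = (- c) + nsmul ((p ^ m - 1) * t) y'" by (simp only: neg_ns)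
        thus "- a \<in> D" using memD[OF sg_uminus[OF sgC \<open>c \<in> C\<close>]] by metis
      qed
      have DW: "D \<subseteq> W"
        unfolding D_def using CW sg_add[OF W] sg_ns[OF W y'W] by blast
      have CD: "C \<subseteq> D" using memD[of _ 0] by force
      have LD: "L \<subseteq> D" using LC CD by blast
      have DK: "D \<inter> K \<subseteq> L"
      proof
        fix z assume "z \<in> D \<inter> K"
        then obtain c t where c: "c \<in> C" and z: "z = c + nsmul t y'" and zK: "z \<in> K"
          unfolding D_def by blast
        show "z \<in> L"
        proof (cases "p dvd t")
          case True
          then obtain t' where "t = p * t'" by blast
          hence "nsmul t y' = nsmul t' (nsmul p y')" by (simp add: ns_mult[symmetric] mult.commute)
          hence "nsmul t y' \<in> C" using sg_ns[OF sgC py'] by simp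
          hence "z \<in> C" using z sg_add[OF sgC c] by simp
          thus ?thesis using zK CK by blast
        next
          case False
          then obtain s r where sr: "s * t = p * r + 1" using inv_mod_p by blast
          have "nsmul s z = nsmul s c + nsmul (s * t) y'" by (simp add: z ns_plus ns_mult)
          also have "\<dots> = nsmul s c + nsmul r (nsmul p y') + y'"
          proof -
            have "nsmul (s * t) y' = nsmul (p * r) y' + nsmul 1 y'" by (simp only: sr ns_add)
            also have "\<dots> = nsmul (p * r) y' + y'" by (simp only: ns1)
            also have "\<dots> = nsmul r (nsmul p y') + y'" by (simp only: ns_mult[symmetric] mult.commute)
            finally show ?thesis by (simp add: add.assoc)
          qed
          finally have "y' = (- (nsmul s c + nsmul r (nsmul p y'))) + nsmul s z"
            by (simp add: algebra_simps)
          moreover have "- (nsmul s c + nsmul r (nsmul p y')) \<in> C"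
            using sgC c py' by (meson sg_uminus sg_add sg_ns)
          moreover have "nsmul s z \<in> K" using sg_ns[OF K zK] .
          ultimately have "y' \<in> ss C K" unfolding ss_iff by blast
          thus ?thesis using ny' by blast
        qed
      qed
      have "D \<in> CC" unfolding CC_def using sgD DW LD DK by blast
      hence "C = D" using Cmax CD by blast
      moreover have "y' \<in> D" using memD[OF sg_0[OF sgC], of 1] by simp
      moreover have "y' \<notin> C" using ny' sg_0[OF K] unfolding ss_iff by force
      ultimately show False by blast
    qed
  qed
  thus ?thesis using sgC CW LC CK by blast
qed

end


lemma sum_const_ns: "sum (\<lambda>_. x) A = nsmul (card A) x"
  by (induction A rule: infinite_finite_induct) (simp_all add: nsSuc)

context Gm begin

lemma submod_act: "submod G act N \<Longrightarrow> g \<in> carrier G \<Longrightarrow> x \<in> N \<Longrightarrow> act g x \<in> N"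
  by (simp add: submod_def)

lemma inv_closed: "g \<in> carrier G \<Longrightarrow> inv\<^bsub>G\<^esub> g \<in> carrier G"
  by (simp add: grp group.inv_closed)

lemma sum_shift:
  assumes h: "h \<in> carrier G"
  shows "(\<Sum>g\<in>carrier G. F g) = (\<Sum>g\<in>carrier G. F (h \<otimes>\<^bsub>G\<^esub> g))"
proof (rule sum.reindex_bij_witness[where i="\<lambda>g. h \<otimes>\<^bsub>G\<^esub> g" and j="\<lambda>g. inv\<^bsub>G\<^esub> h \<otimes>\<^bsub>G\<^esub> g"])
  fix a assume a: "a \<in> carrier G"
  show "h \<otimes>\<^bsub>G\<^esub> (inv\<^bsub>G\<^esub> h \<otimes>\<^bsub>G\<^esub> a) = a"
    using a h grp by (metis group.inv_closed group.inv_solve_left monoid.m_closed group.is_monoid)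
  show "inv\<^bsub>G\<^esub> h \<otimes>\<^bsub>G\<^esub> a \<in> carrier G"
    using a h grp by (meson group.inv_closed group.is_monoid monoid.m_closed)
  show "inv\<^bsub>G\<^esub> h \<otimes>\<^bsub>G\<^esub> (h \<otimes>\<^bsub>G\<^esub> a) = a"
    using a h grp by (meson group.inv_solve_left' group.is_monoid monoid.m_closed)
  show "h \<otimes>\<^bsub>G\<^esub> a \<in> carrier G"
    using a h grp by (meson group.is_monoid monoid.m_closed)
  show "F (h \<otimes>\<^bsub>G\<^esub> (inv\<^bsub>G\<^esub> h \<otimes>\<^bsub>G\<^esub> a)) = F a"
    using a h grp by (metis group.inv_closed group.inv_solve_left monoid.m_closed group.is_monoid)
qed

lemma RM:
  assumes W: "submod G act (W::'m set)" and K: "submod G act K" and KW: "K \<subseteq> W"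
    and L: "submod G act L" and LK: "L \<subseteq> K"
    and C': "sg C'" and C'W: "C' \<subseteq> W" and C'K: "C' \<inter> K \<subseteq> L" and cover: "W \<subseteq> ss C' K"
  shows "\<exists>C. submod G act C \<and> C \<subseteq> W \<and> L \<subseteq> C \<and> C \<inter> K \<subseteq> L \<and> W \<subseteq> ss C K"
proof -
  obtain u where u: "\<And>y::'m. nsmul (u * card (carrier G)) y = y" using avg by blast
  have sgK: "sg K" and sgL: "sg L" and sgW: "sg W" using K L W submod_sg by auto
  define pi where "pi y = (SOME k. k \<in> K \<and> y - k \<in> C')" for y
  have pi1: "pi y \<in> K \<and> y - pi y \<in> C'" if yW: "y \<in> W" for y
  proof -
    have "y \<in> ss C' K" using cover yW by blast
    then obtain c k where "c \<in> C'" "k \<in> K" "y = c + k" by (auto simp: ss_iff)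
    hence "\<exists>k. k \<in> K \<and> y - k \<in> C'" by (metis add_diff_cancel)
    thus ?thesis unfolding pi_def by (rule someI_ex)
  qed
  have pi_add: "pi (a + b) - pi a - pi b \<in> L" if "a \<in> W" "b \<in> W" for a b
  proof -
    have ab: "a + b \<in> W" using sg_add[OF sgW that] .
    have "pi (a + b) - pi a - pi b \<in> K"
      using pi1[OF ab] pi1[OF that(1)] pi1[OF that(2)] sgK by (meson sg_diff)
    moreover have "(a + b - pi (a + b)) - (a - pi a) - (b - pi b) \<in> C'"
      using pi1[OF ab] pi1[OF that(1)] pi1[OF that(2)] C' by (meson sg_diff)
    hence "- (pi (a + b) - pi a - pi b) \<in> C'" by (simp add: algebra_simps)
    hence "pi (a + b) - pi a - pi b \<in> C'" using sg_uminus[OF C'] by fastforce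
    ultimately show ?thesis using C'K by blast
  qed
  have pi_K: "pi k - k \<in> L" if "k \<in> K" for k
  proof -
    have kW: "k \<in> W" using that KW by blast
    have "pi k - k \<in> K" using pi1[OF kW] that sgK by (meson sg_diff)
    moreover have "- (k - pi k) \<in> C'" using pi1[OF kW] sg_uminus[OF C'] by blast
    hence "pi k - k \<in> C'" by simp
    ultimately show ?thesis using C'K by blast
  qed
  define pp where "pp y = nsmul u (\<Sum>g\<in>carrier G. act g (pi (act (inv\<^bsub>G\<^esub> g) y)))" for y
  have actW: "act g y \<in> W" if "g \<in> carrier G" "y \<in> W" for g y using submod_act[OF W that] .
  have pp_K: "pp y \<in> K" if "y \<in> W" for y
    unfolding pp_def
    by (intro sg_ns[OF sgK] sg_sum[OF sgK] submod_act[OF K] conjunct1[OF pi1] actW inv_closed that)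
  have pp_add: "pp (a + b) - pp a - pp b \<in> L" if "a \<in> W" "b \<in> W" for a b
  proof -
    have "pp (a + b) - pp a - pp b = nsmul u (\<Sum>g\<in>carrier G.
            act g (pi (act (inv\<^bsub>G\<^esub> g) a + act (inv\<^bsub>G\<^esub> g) b) - pi (act (inv\<^bsub>G\<^esub> g) a) - pi (act (inv\<^bsub>G\<^esub> g) b)))"
    proof -
      have e1: "act (inv\<^bsub>G\<^esub> g) (a + b) = act (inv\<^bsub>G\<^esub> g) a + act (inv\<^bsub>G\<^esub> g) b"
        if "g \<in> carrier G" for g
        using act_additive[OF inv_closed[OF that]] unfolding additive_def by blast
      have e2: "act g (X - Y - Z) = act g X - act g Y - act g Z" if "g \<in> carrier G" for g X Y Z
        using additive_diff[OF act_additive[OF that]] by simp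
      have "pp (a + b) - pp a - pp b = nsmul u ((\<Sum>g\<in>carrier G. act g (pi (act (inv\<^bsub>G\<^esub> g) (a + b))))
         - (\<Sum>g\<in>carrier G. act g (pi (act (inv\<^bsub>G\<^esub> g) a))) - (\<Sum>g\<in>carrier G. act g (pi (act (inv\<^bsub>G\<^esub> g) b))))"
        unfolding pp_def by (simp only: ns_diff)
      also have "\<dots> = nsmul u (\<Sum>g\<in>carrier G. act g (pi (act (inv\<^bsub>G\<^esub> g) (a + b)))
         - act g (pi (act (inv\<^bsub>G\<^esub> g) a)) - act g (pi (act (inv\<^bsub>G\<^esub> g) b)))"
        by (simp only: sum_subtractf)
      also have "\<dots> = nsmul u (\<Sum>g\<in>carrier G.
            act g (pi (act (inv\<^bsub>G\<^esub> g) a + act (inv\<^bsub>G\<^esub> g) b) - pi (act (inv\<^bsub>G\<^esub> g) a) - pi (act (inv\<^bsub>G\<^esub> g) b)))"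
        by (intro arg_cong[where f="nsmul u"] sum.cong refl) (simp add: e1 e2)
      finally show ?thesis .
    qed
    also have "\<dots> \<in> L"
      by (intro sg_ns[OF sgL] sg_sum[OF sgL] submod_act[OF L] pi_add actW inv_closed that)
    finally show ?thesis .
  qed
  have pp_eq: "pp (act h y) = act h (pp y)" if h: "h \<in> carrier G" and y: "y \<in> W" for h y
  proof -
    have "(\<Sum>g\<in>carrier G. act g (pi (act (inv\<^bsub>G\<^esub> g) (act h y))))
        = (\<Sum>g\<in>carrier G. act (h \<otimes>\<^bsub>G\<^esub> g) (pi (act (inv\<^bsub>G\<^esub> (h \<otimes>\<^bsub>G\<^esub> g)) (act h y))))"
      by (rule sum_shift[OF h])
    also have "\<dots> = (\<Sum>g\<in>carrier G. act h (act g (pi (act (inv\<^bsub>G\<^esub> g) y))))"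
    proof (rule sum.cong[OF refl])
      fix g assume g: "g \<in> carrier G"
      have "inv\<^bsub>G\<^esub> (h \<otimes>\<^bsub>G\<^esub> g) = inv\<^bsub>G\<^esub> g \<otimes>\<^bsub>G\<^esub> inv\<^bsub>G\<^esub> h"
        using grp g h by (simp add: group.inv_mult_group)
      hence "act (inv\<^bsub>G\<^esub> (h \<otimes>\<^bsub>G\<^esub> g)) (act h y) = act (inv\<^bsub>G\<^esub> g) y"
        using g h by (simp add: act_mult inv_closed act_inv1)
      thus "act (h \<otimes>\<^bsub>G\<^esub> g) (pi (act (inv\<^bsub>G\<^esub> (h \<otimes>\<^bsub>G\<^esub> g)) (act h y)))
          = act h (act g (pi (act (inv\<^bsub>G\<^esub> g) y)))"
        using g h by (simp add: act_mult)
    qed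
    also have "\<dots> = act h (\<Sum>g\<in>carrier G. act g (pi (act (inv\<^bsub>G\<^esub> g) y)))"
      by (simp add: additive_sum[OF act_additive[OF h]])
    finally show ?thesis unfolding pp_def by (simp add: additive_ns[OF act_additive[OF h]])
  qed
  have pp_Kid: "pp k - k \<in> L" if k: "k \<in> K" for k
  proof -
    have "(\<Sum>g\<in>carrier G. act g (pi (act (inv\<^bsub>G\<^esub> g) k))) - nsmul (card (carrier G)) k
        = (\<Sum>g\<in>carrier G. act g (pi (act (inv\<^bsub>G\<^esub> g) k) - act (inv\<^bsub>G\<^esub> g) k))"
      by (simp add: sum_const_ns[symmetric] sum_subtractf[symmetric] additive_diff act_additive act_inv2)
    also have "\<dots> \<in> L"
      by (intro sg_sum[OF sgL] submod_act[OF L] pi_K submod_act[OF K] inv_closed k)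
    finally have "nsmul u ((\<Sum>g\<in>carrier G. act g (pi (act (inv\<^bsub>G\<^esub> g) k))) - nsmul (card (carrier G)) k) \<in> L"
      by (rule sg_ns[OF sgL])
    thus ?thesis unfolding pp_def by (simp add: ns_diff ns_mult[symmetric] u)
  qed
  define C where "C = {y \<in> W. pp y \<in> L}"
  have pp0: "pp 0 \<in> L"
  proof -
    have "pp (0 + 0) - pp 0 - pp 0 \<in> L" using pp_add sg_0[OF sgW] by blast
    hence "- (pp (0 + 0) - pp 0 - pp 0) \<in> L" by (rule sg_uminus[OF sgL])
    thus ?thesis by simp
  qed
  have C_add: "a + b \<in> C" if "a \<in> C" "b \<in> C" for a b
  proof -
    have "pp (a + b) = (pp (a + b) - pp a - pp b) + pp a + pp b" by simp
    thus ?thesis using that pp_add sgL sg_add[OF sgW] unfolding C_def by (metis (no_types, lifting) mem_Collect_eq sg_add)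
  qed
  have C_neg: "- a \<in> C" if "a \<in> C" for a
  proof -
    have aW: "a \<in> W" "- a \<in> W" using that sg_uminus[OF sgW] unfolding C_def by auto
    have "pp (a + - a) - pp a - pp (- a) \<in> L" using pp_add aW by blast
    moreover have "pp a \<in> L" using that unfolding C_def by blast
    ultimately have "pp 0 - (pp (a + - a) - pp a - pp (- a)) - pp a \<in> L"
      using pp0 sg_diff[OF sgL] by blast
    hence "pp (- a) \<in> L" by simp
    thus ?thesis using aW unfolding C_def by blast
  qed
  have subC: "submod G act C"
    unfolding submod_def
  proof (intro conjI ballI)
    show "0 \<in> C" using pp0 sg_0[OF sgW] unfolding C_def by blast
    show "x + y \<in> C" if "x \<in> C" "y \<in> C" for x y using C_add that .
    show "- x \<in> C" if "x \<in> C" for x using C_neg that .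
    show "act g x \<in> C" if "g \<in> carrier G" "x \<in> C" for g x
      using that pp_eq submod_act[OF L] actW unfolding C_def by auto
  qed
  have CW: "C \<subseteq> W" unfolding C_def by blast
  have LC: "L \<subseteq> C"
  proof
    fix l assume l: "l \<in> L"
    hence "pp l - l \<in> L" using pp_Kid LK by blast
    hence "pp l \<in> L" using sg_diff_iff[OF sgL l] by blast
    thus "l \<in> C" using l LK KW unfolding C_def by blast
  qed
  have CK: "C \<inter> K \<subseteq> L"
  proof
    fix k assume "k \<in> C \<inter> K"
    hence "pp k \<in> L" "pp k - k \<in> L" "k \<in> K" using pp_Kid unfolding C_def by auto
    thus "k \<in> L" by (metis sg_diff sgL diff_diff_eq2 diff_add_cancel add_diff_cancel_left')
  qed
  have cov: "W \<subseteq> ss C K"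
  proof
    fix y assume y: "y \<in> W"
    have ppy: "pp y \<in> K" "pp y \<in> W" using pp_K[OF y] KW by auto
    have yd: "y - pp y \<in> W" using sg_diff[OF sgW y ppy(2)] .
    have "pp (y - pp y + pp y) - pp (y - pp y) - pp (pp y) \<in> L" using pp_add yd ppy(2) by blast
    moreover have "pp (pp y) - pp y \<in> L" using pp_Kid ppy(1) by blast
    ultimately have "- ((pp (y - pp y + pp y) - pp (y - pp y) - pp (pp y)) + (pp (pp y) - pp y)) \<in> L"
      using sgL by (meson sg_add sg_uminus)
    hence "pp (y - pp y) \<in> L" by simp
    hence "y - pp y \<in> C" using yd unfolding C_def by blast
    moreover have "y = (y - pp y) + pp y" by simp
    ultimately show "y \<in> ss C K" using ppy(1) unfolding ss_iff by blast
  qed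
  show ?thesis using subC CW LC CK cov by blast
qed

end


context Gm begin

lemma submod_ns: "submod G act N \<Longrightarrow> y \<in> N \<Longrightarrow> nsmul n y \<in> N"
  using sg_ns submod_sg by blast

lemma act_ns: "g \<in> carrier G \<Longrightarrow> act g (nsmul n y) = nsmul n (act g y)"
  using additive_ns act_additive by blast

lemma submod_ss:
  assumes "submod G act A" "submod G act B"
  shows "submod G act (ss A B)"
  unfolding submod_def
proof (intro conjI ballI)
  have sA: "sg A" and sB: "sg B" using assms submod_sg by auto
  show "0 \<in> ss A B" unfolding ss_iff using sg_0[OF sA] sg_0[OF sB] by force
  show "x + y \<in> ss A B" if xy: "x \<in> ss A B" "y \<in> ss A B" for x y
  proof -
    obtain a b a' b' where "a \<in> A" "b \<in> B" "a' \<in> A" "b' \<in> B" "x = a + b" "y = a' + b'"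
      using xy unfolding ss_iff by blast
    moreover have "x + y = (a + a') + (b + b')" using calculation by (simp add: algebra_simps)
    ultimately show ?thesis unfolding ss_iff using sg_add[OF sA] sg_add[OF sB] by blast
  qed
  show "- x \<in> ss A B" if xx: "x \<in> ss A B" for x
  proof -
    obtain a b where "a \<in> A" "b \<in> B" "x = a + b" using xx unfolding ss_iff by blast
    moreover have "- x = (- a) + (- b)" using calculation by (simp add: algebra_simps)
    ultimately show ?thesis unfolding ss_iff using sg_uminus[OF sA] sg_uminus[OF sB] by blast
  qed
  show "act g x \<in> ss A B" if gx: "g \<in> carrier G" "x \<in> ss A B" for g x
  proof -
    obtain a b where "a \<in> A" "b \<in> B" "x = a + b" using gx unfolding ss_iff by blast
    moreover have "act g x = act g a + act g b"
      using calculation act_additive[OF gx(1)] unfolding additive_def by blast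
    ultimately show ?thesis unfolding ss_iff using submod_act assms gx(1) by blast
  qed
qed

lemma submod_img:
  assumes "submod G act A"
  shows "submod G act (nsmul n ` A)"
  unfolding submod_def
proof (intro conjI ballI)
  have sA: "sg A" using assms submod_sg by auto
  show "0 \<in> nsmul n ` A" using sg_0[OF sA] by (metis image_eqI ns_zero)
  show "x + y \<in> nsmul n ` A" if "x \<in> nsmul n ` A" "y \<in> nsmul n ` A" for x y
    using that sg_add[OF sA] by (auto simp: ns_plus[symmetric])
  show "- x \<in> nsmul n ` A" if "x \<in> nsmul n ` A" for x
    using that sg_uminus[OF sA] by (auto simp: ns_uminus[symmetric])
  show "act g x \<in> nsmul n ` A" if "g \<in> carrier G" "x \<in> nsmul n ` A" for g x
    using that submod_act[OF assms] by (auto simp: act_ns)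
qed

lemma submod_ker:
  assumes "submod G act A"
  shows "submod G act {y \<in> A. nsmul n y = 0}"
  using assms unfolding submod_def
  by (auto simp: ns_plus ns_uminus act_ns[symmetric] additive_0[OF act_additive])

lemma E0:
  assumes "nsmul e x = 0" "e > 0" "nsmul (p ^ k) x = 0" "e < p ^ k"
  shows "nsmul (p ^ (k - 1)) x = 0"
proof -
  have g: "nsmul (gcd e (p ^ k)) x = 0" using ns_gcd assms by auto
  have "gcd e (p ^ k) dvd p ^ k" by simp
  then obtain i where i: "i \<le> k" "gcd e (p ^ k) = p ^ i" using divides_primepow_nat[OF pr] by blast
  have "i \<noteq> k"
  proof
    assume "i = k"
    hence "p ^ k dvd e" using i by (metis gcd_dvd1)
    thus False using assms(2,4) by (simp add: nat_dvd_not_less)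
  qed
  hence "p ^ (k - 1) = p ^ (k - 1 - i) * p ^ i" using i by (simp add: power_add[symmetric])
  thus ?thesis using g i by (simp add: ns_mult)
qed

lemma E1:
  assumes "\<forall>x\<in>N. nsmul (p ^ k) x = (0::'m)" "expo N < p ^ k"
  shows "\<forall>x\<in>N. nsmul (p ^ (k - 1)) x = 0"
proof -
  have "expo N > 0 \<and> (\<forall>x\<in>N. nsmul (expo N) x = 0)"
    unfolding expo_def using LeastI[of "\<lambda>n. n > 0 \<and> (\<forall>x\<in>N. nsmul n x = 0)" "p ^ k"] assms p_pos by auto
  thus ?thesis using E0 assms by blast
qed

lemma E2:
  assumes "k \<ge> 1" "\<forall>x\<in>N. nsmul (p ^ (k - 1)) x = (0::'m)"
  shows "expo N < p ^ k"
proof -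
  have "expo N \<le> p ^ (k - 1)"
    unfolding expo_def by (rule Least_le) (use assms p_pos in auto)
  also have "\<dots> < p ^ k" using assms(1) p_gt1 by (simp add: power_strict_increasing)
  finally show ?thesis .
qed

lemma E3: "\<exists>k. expo (UNIV::'m set) = p ^ k"
proof -
  define e where "e = expo (UNIV::'m set)"
  have e: "e > 0 \<and> (\<forall>x::'m. nsmul e x = 0)"
    unfolding e_def expo_def using LeastI[of "\<lambda>n. n > 0 \<and> (\<forall>x\<in>(UNIV::'m set). nsmul n x = 0)" "p ^ m"] kill p_pos by auto
  have g: "\<forall>x::'m. nsmul (gcd e (p ^ m)) x = 0"
  proof
    fix x :: 'm show "nsmul (gcd e (p ^ m)) x = 0" using ns_gcd[of e x "p ^ m"] e kill[of x] by auto
  qed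
  have "gcd e (p ^ m) dvd p ^ m" by simp
  then obtain i where i: "gcd e (p ^ m) = p ^ i" using divides_primepow_nat[OF pr] by blast
  have "e \<le> p ^ i" unfolding e_def expo_def by (rule Least_le) (use g i p_pos in auto)
  moreover have "p ^ i \<le> e" using e i by (metis dvd_imp_le gcd_dvd1)
  ultimately show ?thesis unfolding e_def by (metis antisym)
qed

lemma E4:
  assumes "expo (UNIV::'m set) = p ^ k" "\<exists>x::'m. x \<noteq> 0"
  shows "k \<ge> 1" "\<forall>x::'m. nsmul (p ^ k) x = 0" "\<exists>x::'m. nsmul (p ^ (k - 1)) x \<noteq> 0"
proof -
  have e: "expo (UNIV::'m set) > 0 \<and> (\<forall>x::'m. nsmul (expo (UNIV::'m set)) x = 0)"
    unfolding expo_def using LeastI[of "\<lambda>n. n > 0 \<and> (\<forall>x\<in>(UNIV::'m set). nsmul n x = 0)" "p ^ m"] kill p_pos by auto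
  thus k: "\<forall>x::'m. nsmul (p ^ k) x = 0" using assms by simp
  show "k \<ge> 1"
  proof (rule ccontr)
    assume "\<not> 1 \<le> k" hence "k = 0" by simp
    thus False using k assms(2) by simp
  qed
  thus "\<exists>x::'m. nsmul (p ^ (k - 1)) x \<noteq> 0" using E2[of k UNIV] assms(1) by auto
qed

lemma Core:
  assumes W: "submod G act (W::'m set)" and k1: "k \<ge> 1"
    and killW: "\<forall>x\<in>W. nsmul (p ^ k) x = 0"
    and xW: "x \<in> W" and nx: "nsmul (p ^ (k - 1)) x \<noteq> 0"
    and crit: "\<forall>T. submod G act T \<and> T \<subseteq> W \<and> T \<noteq> W \<longrightarrow> (\<forall>y\<in>T. nsmul (p ^ (k - 1)) y = 0)"
  shows "\<forall>y\<in>W. nsmul (p ^ (k - 1)) y = 0 \<longrightarrow> y \<in> nsmul p ` W"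
proof -
  define pW where "pW = nsmul p ` W"
  define Wk where "Wk = {y \<in> W. nsmul (p ^ (k - 1)) y = 0}"
  define K where "K = ss Wk pW"
  have sW: "sg W" using W submod_sg by blast
  have pWs: "submod G act pW" unfolding pW_def using submod_img[OF W] .
  have Wks: "submod G act Wk" unfolding Wk_def using submod_ker[OF W] .
  have Ks: "submod G act K" unfolding K_def using submod_ss[OF Wks pWs] .
  have pWW: "pW \<subseteq> W" unfolding pW_def using submod_ns[OF W] by blast
  have WkW: "Wk \<subseteq> W" unfolding Wk_def by blast
  have KW: "K \<subseteq> W" unfolding K_def using pWW WkW sg_add[OF sW] by (force simp: ss_iff)
  have pWK: "pW \<subseteq> K" unfolding K_def using sg_0[OF submod_sg[OF Wks]] by (force simp: ss_iff)
  have WkK: "Wk \<subseteq> K" unfolding K_def using sg_0[OF submod_sg[OF pWs]] by (force simp: ss_iff)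
  obtain C' where C': "sg C'" "C' \<subseteq> W" "pW \<subseteq> C'" "C' \<inter> K \<subseteq> pW" "W \<subseteq> ss C' K"
  proof -
    have "\<exists>C. sg C \<and> C \<subseteq> W \<and> pW \<subseteq> C \<and> C \<inter> K \<subseteq> pW \<and> W \<subseteq> ss C K"
    proof (rule AC[OF sW KW submod_sg[OF Ks] pWK submod_sg[OF pWs]])
      fix C y assume "sg C" "C \<subseteq> W" "pW \<subseteq> C" "C \<inter> K \<subseteq> pW" "y \<in> W" "nsmul p y \<in> ss C K"
      hence "nsmul p (y - 0) \<in> C" unfolding pW_def by auto
      thus "\<exists>f\<in>K. nsmul p (y - f) \<in> C" using sg_0[OF submod_sg[OF Ks]] by blast
    qed
    thus ?thesis using that by blast
  qed
  obtain C where C: "submod G act C" "C \<subseteq> W" "pW \<subseteq> C" "C \<inter> K \<subseteq> pW" "W \<subseteq> ss C K"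
    using RM[OF W Ks KW pWs pWK C'(1,2,4,5)] by blast
  show ?thesis
  proof (cases "C = W")
    case True
    show ?thesis
    proof (intro ballI impI)
      fix y assume "y \<in> W" "nsmul (p ^ (k - 1)) y = 0"
      hence "y \<in> Wk" unfolding Wk_def by blast
      hence "y \<in> C \<inter> K" using WkK True WkW by blast
      thus "y \<in> nsmul p ` W" using C(4) unfolding pW_def by blast
    qed
  next
    case False
    hence CWk: "C \<subseteq> Wk" using crit C(1,2) unfolding Wk_def by blast
    have step1: "\<exists>a\<in>Wk. \<exists>z\<in>W. y = a + nsmul p z" if y: "y \<in> W" for y
    proof -
      obtain c q where "c \<in> C" "q \<in> K" "y = c + q" using ss_iff[THEN iffD1, OF subsetD[OF C(5) y]] by blast
      moreover obtain a z where "a \<in> Wk" "z \<in> W" "q = a + nsmul p z"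
        using \<open>q \<in> K\<close> unfolding K_def ss_iff pW_def by blast
      ultimately have "y = (c + a) + nsmul p z" "c + a \<in> Wk"
        using CWk sg_add[OF submod_sg[OF Wks]] by (auto simp: algebra_simps)
      thus ?thesis using \<open>z \<in> W\<close> by blast
    qed
    have stepj: "\<forall>y\<in>W. \<exists>a\<in>Wk. \<exists>z\<in>W. y = a + nsmul (p ^ j) z" for j
    proof (induction j)
      case 0
      show ?case using sg_0[OF submod_sg[OF Wks]] by force
    next
      case (Suc j)
      show ?case
      proof
        fix y assume y: "y \<in> W"
        obtain a z where a: "a \<in> Wk" "z \<in> W" "y = a + nsmul (p ^ j) z" using Suc y by blast
        obtain a' z' where a': "a' \<in> Wk" "z' \<in> W" "z = a' + nsmul p z'" using step1 a(2) by blast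
        have "y = (a + nsmul (p ^ j) a') + nsmul (p ^ Suc j) z'"
          using a a' by (simp add: ns_plus ns_mult[symmetric] mult.commute add.assoc)
        moreover have "a + nsmul (p ^ j) a' \<in> Wk"
          using a a' Wks by (meson submod_ns submod_sg sg_add)
        ultimately show "\<exists>a\<in>Wk. \<exists>z\<in>W. y = a + nsmul (p ^ Suc j) z" using a'(2) by blast
      qed
    qed
    obtain a z where "a \<in> Wk" "z \<in> W" "x = a + nsmul (p ^ k) z" using stepj[of k] xW by blast
    hence "x \<in> Wk" using killW by simp
    thus ?thesis using nx unfolding Wk_def by blast
  qed
qed

lemma submod_UNIV: "submod G act (UNIV::'m set)" by (simp add: submod_def)
lemma submod_zero: "submod G act {0::'m}"
  by (simp add: submod_def additive_0[OF act_additive])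

lemma part2:
  assumes nd: "\<not> decomposable G act" and nz: "\<exists>x::'m. x \<noteq> 0"
  shows "\<forall>N. submod G act N \<and> N \<noteq> UNIV \<longrightarrow> expo N < expo (UNIV::'m set)"
proof (intro allI impI)
  fix N :: "'m set" assume N: "submod G act N \<and> N \<noteq> UNIV"
  obtain k where ek: "expo (UNIV::'m set) = p ^ k" using E3 by blast
  have k1: "k \<ge> 1" and killk: "\<forall>x::'m. nsmul (p ^ k) x = 0" using E4[OF ek nz] by auto
  show "expo N < expo (UNIV::'m set)"
  proof (rule ccontr)
    assume "\<not> expo N < expo (UNIV::'m set)"
    hence nN: "\<not> (\<forall>y\<in>N. nsmul (p ^ (k - 1)) y = 0)" using E2[OF k1, of N] ek by auto
    define F where "F = {T::'m set. submod G act T \<and> T \<noteq> UNIV \<and> \<not> (\<forall>y\<in>T. nsmul (p ^ (k - 1)) y = 0)}"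
    have "finite F" by (rule finite_subset[of _ "Pow UNIV"]) auto
    moreover have "N \<in> F" using N nN unfolding F_def by blast
    ultimately obtain W where WF: "W \<in> F" and Wmin: "\<And>T. T \<in> F \<Longrightarrow> T \<subseteq> W \<Longrightarrow> W = T"
      using finite_has_minimal[of F] by blast
    have Ws: "submod G act W" and WU: "W \<noteq> UNIV" and nW: "\<not> (\<forall>y\<in>W. nsmul (p ^ (k - 1)) y = 0)"
      using WF unfolding F_def by auto
    then obtain x where xW: "x \<in> W" and nx: "nsmul (p ^ (k - 1)) x \<noteq> 0" by blast
    have crit: "\<forall>T. submod G act T \<and> T \<subseteq> W \<and> T \<noteq> W \<longrightarrow> (\<forall>y\<in>T. nsmul (p ^ (k - 1)) y = 0)"
    proof (intro allI impI)
      fix T assume T: "submod G act T \<and> T \<subseteq> W \<and> T \<noteq> W"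
      hence "T \<noteq> UNIV" using WU by blast
      hence "T \<notin> F" using Wmin T by blast
      thus "\<forall>y\<in>T. nsmul (p ^ (k - 1)) y = 0" using T \<open>T \<noteq> UNIV\<close> unfolding F_def by blast
    qed
    have core: "\<forall>y\<in>W. nsmul (p ^ (k - 1)) y = 0 \<longrightarrow> y \<in> nsmul p ` W"
      using Core[OF Ws k1 _ xW nx crit] killk by blast
    have sW: "sg W" using Ws submod_sg by blast
    have sU: "sg (UNIV::'m set)" by (simp add: sg_def)
    have s0: "sg {0::'m}" by (simp add: sg_def)
    obtain C' where C': "sg C'" "C' \<subseteq> UNIV" "{0} \<subseteq> C'" "C' \<inter> W \<subseteq> {0}" "UNIV \<subseteq> ss C' W"
    proof -
      have "\<exists>C. sg C \<and> C \<subseteq> UNIV \<and> {0} \<subseteq> C \<and> C \<inter> W \<subseteq> {0} \<and> UNIV \<subseteq> ss C W"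
      proof (rule AC[OF sU subset_UNIV sW _ s0])
        show "{0} \<subseteq> W" using sg_0[OF sW] by blast
      next
        fix C y assume C: "sg C" "C \<subseteq> UNIV" "{0} \<subseteq> C" "C \<inter> W \<subseteq> {0}" "y \<in> (UNIV::'m set)"
          "nsmul p y \<in> ss C W"
        then obtain c w where cw: "c \<in> C" "w \<in> W" "nsmul p y = c + w" unfolding ss_iff by blast
        have "nsmul (p ^ (k - 1)) (c + w) = nsmul (p ^ k) y"
          using cw(3) k1 by (metis ns_mult power_eq_if mult.commute not_one_le_zero)
        hence "nsmul (p ^ (k - 1)) c + nsmul (p ^ (k - 1)) w = 0" using killk by (simp add: ns_plus)
        hence "nsmul (p ^ (k - 1)) w = - nsmul (p ^ (k - 1)) c" by (simp add: eq_neg_iff_add_eq_0 add.commute)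
        moreover have "- nsmul (p ^ (k - 1)) c \<in> C" using C(1) cw(1) by (simp add: sg_uminus sg_ns)
        moreover have "nsmul (p ^ (k - 1)) w \<in> W" using sW cw(2) by (simp add: sg_ns)
        ultimately have "nsmul (p ^ (k - 1)) w = 0" using C(4) by auto
        then obtain f where f: "f \<in> W" "w = nsmul p f" using core cw(2) by blast
        have "nsmul p (y - f) = c" using cw f by (simp add: ns_diff)
        thus "\<exists>f\<in>W. nsmul p (y - f) \<in> C" using f(1) cw(1) by blast
      qed
      thus ?thesis using that by blast
    qed
    obtain C where C: "submod G act C" "{0} \<subseteq> C" "C \<inter> W \<subseteq> {0}" "UNIV \<subseteq> ss C W"
      using RM[OF submod_UNIV Ws subset_UNIV submod_zero _ C'(1,2,4,5)] sg_0[OF sW] by blast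
    have "decomposable G act"
      unfolding decomposable_def
    proof (intro exI conjI)
      show "submod G act W" "submod G act C" by fact+
      show "W \<noteq> {0}" using xW nx by auto
      show "C \<noteq> {0}"
      proof
        assume "C = {0}"
        have "UNIV \<subseteq> W"
        proof
          fix x :: 'm
          obtain c w where "c \<in> C" "w \<in> W" "x = c + w" using ss_iff[THEN iffD1, OF subsetD[OF C(4) UNIV_I]] by blast
          thus "x \<in> W" using \<open>C = {0}\<close> by simp
        qed
        thus False using WU by blast
      qed
      show "W \<inter> C = {0}" using C(2,3) sg_0[OF sW] by blast
      show "\<forall>x. \<exists>a\<in>W. \<exists>b\<in>C. x = a + b"
      proof
        fix x :: 'm
        obtain c w where "c \<in> C" "w \<in> W" "x = c + w" using ss_iff[THEN iffD1, OF subsetD[OF C(4) UNIV_I]] by blast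
        thus "\<exists>a\<in>W. \<exists>b\<in>C. x = a + b" by (metis add.commute)
      qed
    qed
    thus False using nd by blast
  qed
qed

end


locale Crit = Gm G act p m
  for G :: "('g,'b) monoid_scheme" and act :: "'g \<Rightarrow> 'm::{ab_group_add,finite} \<Rightarrow> 'm"
    and p m :: nat +
  fixes k :: nat
  assumes k1: "k \<ge> 1" and killk: "\<And>x::'m. nsmul (p ^ k) x = 0"
    and top: "\<exists>x::'m. nsmul (p ^ (k - 1)) x \<noteq> 0"
    and crit: "\<forall>N::'m set. submod G act N \<and> N \<noteq> UNIV \<longrightarrow> (\<forall>y\<in>N. nsmul (p ^ (k - 1)) y = 0)"
begin

lemma core1: "nsmul (p ^ (k - 1)) (y::'m) = 0 \<Longrightarrow> y \<in> range (nsmul p)"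
proof -
  obtain x :: 'm where nx: "nsmul (p ^ (k - 1)) x \<noteq> 0" using top by blast
  moreover have a: "\<forall>x\<in>(UNIV::'m set). nsmul (p ^ k) x = 0" using killk by simp
  moreover have c: "\<forall>T. submod G act T \<and> T \<subseteq> UNIV \<and> T \<noteq> UNIV \<longrightarrow> (\<forall>y\<in>T. nsmul (p ^ (k - 1)) y = 0)"
    using crit by blast
  ultimately have "\<forall>y\<in>(UNIV::'m set). nsmul (p ^ (k - 1)) y = 0 \<longrightarrow> y \<in> nsmul p ` UNIV"
    using Core[OF submod_UNIV k1 a UNIV_I nx c] by blast
  thus "nsmul (p ^ (k - 1)) (y::'m) = 0 \<Longrightarrow> y \<in> range (nsmul p)" by blast
qed

definition R :: "nat \<Rightarrow> 'm set" where "R j = range (nsmul (p ^ j))"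

lemma R_submod: "submod G act (R j)"
  unfolding R_def using submod_img[OF submod_UNIV] .

lemma R_sg: "sg (R j)" using R_submod submod_sg by blast

lemma R_mono: "i \<le> j \<Longrightarrow> R j \<subseteq> R i"
proof
  fix x assume "i \<le> j" "x \<in> R j"
  then obtain v where "x = nsmul (p ^ j) v" unfolding R_def by blast
  hence "x = nsmul (p ^ i) (nsmul (p ^ (j - i)) v)" using \<open>i \<le> j\<close>
    by (simp add: ns_mult[symmetric] power_add[symmetric])
  thus "x \<in> R i" unfolding R_def by blast
qed

lemma R_m: "R m = {0}" unfolding R_def using kill by auto

lemma partc:
  assumes g: "g \<in> carrier G" and triv: "\<forall>x\<in>(range (nsmul (p ^ (k - 1))) :: 'm set). act g x = x"
  shows "\<forall>x::'m. act g x = x"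
proof -
  obtain u where u: "\<And>y::'m. nsmul (u * card (carrier G)) y = y" using avg by blast
  have gp: "g [^]\<^bsub>G\<^esub> (r::nat) \<in> carrier G" for r using g grp by (simp add: group.is_monoid monoid.nat_pow_closed)
  have gSuc: "act (g [^]\<^bsub>G\<^esub> Suc r) y = act (g [^]\<^bsub>G\<^esub> r) (act g y)" for r y
    using g gp grp by (simp add: group.is_monoid monoid.nat_pow_Suc act_mult)
  have F1: "act g y - y \<in> R 1" for y :: 'm
  proof -
    have "nsmul (p ^ (k - 1)) (act g y - y) = act g (nsmul (p ^ (k - 1)) y) - nsmul (p ^ (k - 1)) y"
      by (simp add: ns_diff act_ns g)
    also have "\<dots> = 0" using triv by simp
    finally show ?thesis using core1 unfolding R_def by simp
  qed
  have Fj: "\<forall>y::'m. act g y - y \<in> R j" if "j \<ge> 1" for j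
    using that
  proof (induction j rule: dec_induct)
    case base
    then show ?case using F1 by blast
  next
    case (step j)
    have j1: "j \<ge> 1" by fact
    have IH: "\<And>y. act g y - y \<in> R j" using step.IH by blast
    have i: "act g w - w \<in> R (Suc j)" if w: "w \<in> R j" for w
    proof -
      obtain v where v: "w = nsmul (p ^ j) v" using w unfolding R_def by blast
      obtain v' where v': "act g v - v = nsmul (p ^ j) v'" using IH[of v] unfolding R_def by blast
      have "act g w - w = nsmul (p ^ (j + j)) v'"
        using v v' g by (simp add: act_ns ns_diff[symmetric] power_add ns_mult)
      moreover have "R (j + j) \<subseteq> R (Suc j)" using j1 by (intro R_mono) simp
      ultimately show ?thesis unfolding R_def by blast
    qed
    have ii: "act (g [^]\<^bsub>G\<^esub> s) w - w \<in> R (Suc j)" if w: "w \<in> R j" for s :: nat and w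
    proof (induction s)
      case 0
      then show ?case using grp act_one sg_0[OF R_sg] by (simp add: group.is_monoid monoid.nat_pow_0)
    next
      case (Suc s)
      define d where "d = act g w - w"
      have d: "d \<in> R (Suc j)" unfolding d_def using i[OF w] .
      have eq: "act (g [^]\<^bsub>G\<^esub> Suc s) w - w = (act (g [^]\<^bsub>G\<^esub> s) w - w) + act (g [^]\<^bsub>G\<^esub> s) d"
        unfolding gSuc d_def by (simp add: additive_diff[OF act_additive[OF gp]])
      have "act (g [^]\<^bsub>G\<^esub> s) d \<in> R (Suc j)" using submod_act[OF R_submod gp d] .
      thus ?case unfolding eq by (rule sg_add[OF R_sg Suc.IH])
    qed
    have iii: "act (g [^]\<^bsub>G\<^esub> r) y - y - nsmul r (act g y - y) \<in> R (Suc j)" for r y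
    proof (induction r)
      case 0
      then show ?case using grp act_one sg_0[OF R_sg] by (simp add: group.is_monoid monoid.nat_pow_0)
    next
      case (Suc r)
      define d where "d = act g y - y"
      have eq: "act (g [^]\<^bsub>G\<^esub> Suc r) y - y - nsmul (Suc r) d
         = (act (g [^]\<^bsub>G\<^esub> r) y - y - nsmul r d) + (act (g [^]\<^bsub>G\<^esub> r) d - d)"
        unfolding gSuc d_def by (simp add: additive_diff[OF act_additive[OF gp]] nsSuc algebra_simps)
      have "act (g [^]\<^bsub>G\<^esub> r) d - d \<in> R (Suc j)" using ii IH unfolding d_def by blast
      thus ?case unfolding d_def[symmetric] eq by (rule sg_add[OF R_sg Suc.IH[folded d_def]])
    qed
    show ?case
    proof
      fix y :: 'm
      have "g [^]\<^bsub>G\<^esub> card (carrier G) = \<one>\<^bsub>G\<^esub>"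
        using grp g by (metis group.pow_order_eq_1 order_def)
      hence "- nsmul (card (carrier G)) (act g y - y) \<in> R (Suc j)"
        using iii[of "card (carrier G)" y] act_one by simp
      hence "nsmul (card (carrier G)) (act g y - y) \<in> R (Suc j)"
        using sg_uminus[OF R_sg] by fastforce
      hence "nsmul u (nsmul (card (carrier G)) (act g y - y)) \<in> R (Suc j)"
        using sg_ns[OF R_sg] by blast
      thus "act g y - y \<in> R (Suc j)" by (simp add: ns_mult[symmetric] u)
    qed
  qed
  show ?thesis
  proof
    fix x :: 'm
    have "act g x - x \<in> R (max m 1)" using Fj by simp
    moreover have "R (max m 1) \<subseteq> R m" by (intro R_mono) simp
    ultimately show "act g x = x" using R_m by auto
  qed
qed

lemma coset_mem[simp]: "z \<in> coset x B \<longleftrightarrow> z - x \<in> B"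
proof
  assume "z \<in> coset x B"
  then obtain b where "b \<in> B" "z = x + b" unfolding coset_def by blast
  thus "z - x \<in> B" by simp
next
  assume "z - x \<in> B"
  moreover have "z = x + (z - x)" by simp
  ultimately show "z \<in> coset x B" unfolding coset_def by blast
qed

lemma coset_eq: "sg B \<Longrightarrow> coset x B = coset y B \<longleftrightarrow> x - y \<in> B"
proof
  assume sB: "sg B" and e: "coset x B = coset y B"
  have "x \<in> coset x B" using coset_mem[of x x B] sg_0[OF sB] by simp
  thus "x - y \<in> B" using e coset_mem[of x y B] by simp
next
  assume sB: "sg B" and d: "x - y \<in> B"
  show "coset x B = coset y B"
  proof (intro Set.set_eqI)
    fix z
    have e1: "z - y = (z - x) + (x - y)" and e2: "z - x = (z - y) - (x - y)" by simp_all
    have "z - x \<in> B \<longleftrightarrow> z - y \<in> B"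
      using sg_add[OF sB _ d] sg_diff[OF sB _ d] e1 e2 by metis
    thus "z \<in> coset x B \<longleftrightarrow> z \<in> coset y B" using coset_mem by simp
  qed
qed

lemma coset_0: "coset 0 B = B" unfolding coset_def by simp

lemma qadd_coset: assumes sB: "sg B" shows "qadd (coset a B) (coset b B) = coset (a + b) B"
proof (rule Set.set_eqI, rule iffI)
  fix z assume "z \<in> qadd (coset a B) (coset b B)"
  then obtain x y where "x \<in> coset a B" "y \<in> coset b B" "z = x + y" unfolding qadd_def by blast
  hence "x - a \<in> B" "y - b \<in> B" using coset_mem by auto
  hence "z - (a + b) \<in> B" using sg_add[OF sB] \<open>z = x + y\<close> by (metis add_diff_add)
  thus "z \<in> coset (a + b) B" using coset_mem by simp
next
  fix z assume "z \<in> coset (a + b) B"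
  hence "z - (a + b) \<in> B" using coset_mem by simp
  hence "z - a - b \<in> B" by (simp add: algebra_simps)
  hence "z - b \<in> coset a B" "b \<in> coset b B" using coset_mem sg_0[OF sB] by (auto simp: algebra_simps)
  moreover have "z = (z - b) + b" by simp
  ultimately show "z \<in> qadd (coset a B) (coset b B)" unfolding qadd_def by blast
qed

lemma act_coset:
  assumes g: "g \<in> carrier G" and B: "submod G act B"
  shows "act g ` coset a B = coset (act g a) B"
proof -
  have "act g ` B = B"
  proof
    show "act g ` B \<subseteq> B" using submod_act[OF B g] by blast
    show "B \<subseteq> act g ` B"
    proof
      fix b assume "b \<in> B"
      hence "act (inv\<^bsub>G\<^esub> g) b \<in> B" using submod_act[OF B inv_closed[OF g]] by blast
      moreover have "b = act g (act (inv\<^bsub>G\<^esub> g) b)" using act_inv2[OF g] by simp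
      ultimately show "b \<in> act g ` B" by blast
    qed
  qed
  moreover have "act g ` coset a B = coset (act g a) (act g ` B)"
    unfolding coset_def image_image using act_additive[OF g] unfolding additive_def by (auto simp: image_iff)
  ultimately show ?thesis by simp
qed

lemma pdiv:
  assumes i: "i < k" and e: "nsmul (p ^ i) y \<in> R (Suc i)"
  shows "y \<in> R 1"
proof -
  obtain z where z: "nsmul (p ^ i) y = nsmul (p ^ Suc i) z" using e unfolding R_def by blast
  have "nsmul (p ^ i) (y - nsmul p z) = 0" using z by (simp add: ns_diff ns_mult[symmetric] mult.commute)
  hence "nsmul (p ^ (k - 1 - i)) (nsmul (p ^ i) (y - nsmul p z)) = 0" by simp
  moreover have "p ^ (k - 1) = p ^ (k - 1 - i) * p ^ i" using i by (simp add: power_add[symmetric])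
  ultimately have "nsmul (p ^ (k - 1)) (y - nsmul p z) = 0" by (simp add: ns_mult)
  then obtain w where "y - nsmul p z = nsmul p w" using core1 by blast
  hence "y = nsmul p (w + z)" by (simp add: ns_plus algebra_simps)
  thus ?thesis unfolding R_def by simp
qed

lemma lay:
  assumes i: "i < k" and e: "nsmul (p ^ i) a - nsmul (p ^ i) b \<in> R (Suc i)"
  shows "nsmul (p ^ j) a - nsmul (p ^ j) b \<in> R (Suc j)"
proof -
  have "nsmul (p ^ i) (a - b) \<in> R (Suc i)" using e by (simp add: ns_diff)
  then obtain w where "a - b = nsmul p w" using pdiv[OF i] unfolding R_def by auto
  hence "nsmul (p ^ j) a - nsmul (p ^ j) b = nsmul (p ^ Suc j) w"
    by (simp add: ns_diff[symmetric] ns_mult[symmetric] mult.commute)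
  thus ?thesis unfolding R_def by blast
qed

lemma R_alt: "pM p i = R i" unfolding pM_def R_def by simp

lemma quot_R: "X \<in> quot (R i) B \<longleftrightarrow> (\<exists>y. X = coset (nsmul (p ^ i) y) B)"
  unfolding quot_def R_def by blast


lemma partb:
  assumes i: "i < k"
  shows "qsimple G act (pM p i) (pM p (Suc i))"
  unfolding qsimple_def R_alt
proof (intro conjI allI impI)
  let ?B = "R (Suc i)"
  have sB: "sg ?B" by (rule R_sg)
  obtain x0 :: 'm where x0: "nsmul (p ^ (k - 1)) x0 \<noteq> 0" using top by blast
  show "\<exists>X\<in>quot (R i) ?B. X \<noteq> ?B"
  proof (intro bexI)
    show "coset (nsmul (p ^ i) x0) ?B \<in> quot (R i) ?B" using quot_R by blast
    show "coset (nsmul (p ^ i) x0) ?B \<noteq> ?B"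
    proof
      assume "coset (nsmul (p ^ i) x0) ?B = ?B"
      hence "coset (nsmul (p ^ i) x0) ?B = coset 0 ?B" by (simp add: coset_0)
      hence "nsmul (p ^ i) x0 \<in> ?B" using coset_eq[OF sB] by simp
      hence "x0 \<in> R 1" using pdiv[OF i] by blast
      then obtain z where "x0 = nsmul p z" unfolding R_def by auto
      moreover have "p ^ (k - 1) * p = p ^ k" using k1 by (cases k) auto
      ultimately have "nsmul (p ^ (k - 1)) x0 = nsmul (p ^ k) z" by (simp add: ns_mult[symmetric])
      thus False using x0 killk by simp
    qed
  qed
next
  fix S
  let ?B = "R (Suc i)"
  have sB: "sg ?B" by (rule R_sg)
  assume Sq: "S \<subseteq> quot (R i) ?B"
  assume "?B \<in> S \<and> (\<forall>X\<in>S. \<forall>Y\<in>S. qadd X Y \<in> S) \<and> (\<forall>X\<in>S. uminus ` X \<in> S) \<and>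
        (\<forall>g\<in>carrier G. \<forall>X\<in>S. act g ` X \<in> S)"
  hence BS: "?B \<in> S" and Sadd: "\<forall>X\<in>S. \<forall>Y\<in>S. qadd X Y \<in> S"
    and Sneg: "\<forall>X\<in>S. uminus ` X \<in> S" and Sact: "\<forall>g\<in>carrier G. \<forall>X\<in>S. act g ` X \<in> S" by auto
  define T where "T = \<Union>S"
  have Tsub: "submod G act T"
    unfolding submod_def T_def
  proof (intro conjI ballI)
    show "0 \<in> \<Union>S" using BS sg_0[OF sB] by blast
    show "x + y \<in> \<Union>S" if "x \<in> \<Union>S" "y \<in> \<Union>S" for x y
      using that Sadd unfolding qadd_def by blast
    show "- x \<in> \<Union>S" if "x \<in> \<Union>S" for x using that Sneg by blast
    show "act g x \<in> \<Union>S" if "g \<in> carrier G" "x \<in> \<Union>S" for g x using that Sact by blast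
  qed
  have TA: "T \<subseteq> R i"
  proof
    fix t assume "t \<in> T"
    then obtain X where "X \<in> S" "t \<in> X" unfolding T_def by blast
    then obtain y where "X = coset (nsmul (p ^ i) y) ?B" using Sq quot_R by blast
    hence "t - nsmul (p ^ i) y \<in> ?B" using \<open>t \<in> X\<close> coset_mem by blast
    hence "t - nsmul (p ^ i) y \<in> R i" using R_mono[of i "Suc i"] by auto
    moreover have "nsmul (p ^ i) y \<in> R i" unfolding R_def by simp
    ultimately have "(t - nsmul (p ^ i) y) + nsmul (p ^ i) y \<in> R i" by (rule sg_add[OF R_sg])
    thus "t \<in> R i" by simp
  qed
  have BT: "?B \<subseteq> T" using BS unfolding T_def by blast
  define T' where "T' = {y. nsmul (p ^ i) y \<in> T}"
  have sT: "sg T" using Tsub submod_sg by blast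
  have T's: "submod G act T'"
    unfolding submod_def T'_def
  proof (intro conjI ballI; simp only: mem_Collect_eq)
    show "nsmul (p ^ i) 0 \<in> T" using sg_0[OF sT] by simp
    show "nsmul (p ^ i) (x + y) \<in> T" if "nsmul (p ^ i) x \<in> T" "nsmul (p ^ i) y \<in> T" for x y
      using sg_add[OF sT that] by (simp add: ns_plus)
    show "nsmul (p ^ i) (- x) \<in> T" if "nsmul (p ^ i) x \<in> T" for x
      using sg_uminus[OF sT that] by (simp add: ns_uminus)
    show "nsmul (p ^ i) (act g x) \<in> T" if "g \<in> carrier G" "nsmul (p ^ i) x \<in> T" for g x
      using submod_act[OF Tsub that] that(1) by (simp add: act_ns)
  qed
  have "T = ?B \<or> T = R i"
  proof (cases "T' = UNIV")
    case True
    hence "R i \<subseteq> T" unfolding T'_def R_def by auto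
    thus ?thesis using TA by blast
  next
    case False
    have "T \<subseteq> ?B"
    proof
      fix t assume t: "t \<in> T"
      then obtain y where y: "t = nsmul (p ^ i) y" using TA unfolding R_def by blast
      hence "y \<in> T'" using t unfolding T'_def by simp
      hence "nsmul (p ^ (k - 1)) y = 0" using crit T's False by blast
      then obtain z where "y = nsmul p z" using core1 by blast
      hence "t = nsmul (p ^ Suc i) z" using y by (simp add: ns_mult[symmetric] mult.commute)
      thus "t \<in> ?B" unfolding R_def by blast
    qed
    thus ?thesis using BT by blast
  qed
  thus "S = {?B} \<or> S = quot (R i) ?B"
  proof
    assume TB: "T = ?B"
    have "S \<subseteq> {?B}"
    proof
      fix X assume X: "X \<in> S"
      then obtain y where Xy: "X = coset (nsmul (p ^ i) y) ?B" using Sq quot_R by blast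
      hence "nsmul (p ^ i) y \<in> X" using coset_mem sg_0[OF sB] by simp
      hence "nsmul (p ^ i) y \<in> ?B" using X TB unfolding T_def by blast
      hence "X = coset 0 ?B" using Xy coset_eq[OF sB] by simp
      thus "X \<in> {?B}" using coset_0 by simp
    qed
    thus ?thesis using BS by blast
  next
    assume TA': "T = R i"
    have "quot (R i) ?B \<subseteq> S"
    proof
      fix X assume "X \<in> quot (R i) ?B"
      then obtain y where Xy: "X = coset (nsmul (p ^ i) y) ?B" using quot_R by blast
      have "nsmul (p ^ i) y \<in> T" using TA' unfolding R_def by simp
      then obtain Y where Y: "Y \<in> S" "nsmul (p ^ i) y \<in> Y" unfolding T_def by blast
      then obtain y' where Yy: "Y = coset (nsmul (p ^ i) y') ?B" using Sq quot_R by blast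
      hence "nsmul (p ^ i) y - nsmul (p ^ i) y' \<in> ?B" using Y coset_mem by blast
      hence "X = Y" using Xy Yy coset_eq[OF sB] by simp
      thus "X \<in> S" using Y by simp
    qed
    thus ?thesis using Sq by blast
  qed
qed

end


context Crit begin

lemma partiso:
  assumes i: "i < k" and j: "j < k"
  shows "qiso G act (pM p i) (pM p (Suc i)) (pM p j) (pM p (Suc j))"
proof -
  let ?Bi = "R (Suc i)" and ?Bj = "R (Suc j)"
  have sBi: "sg ?Bi" and sBj: "sg ?Bj" by (rule R_sg)+
  define phi where "phi X = {z. \<exists>y. nsmul (p ^ i) y \<in> X \<and> z - nsmul (p ^ j) y \<in> ?Bj}" for X
  have phic: "phi (coset (nsmul (p ^ i) y0) ?Bi) = coset (nsmul (p ^ j) y0) ?Bj" for y0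
  proof (rule Set.set_eqI, rule iffI)
    fix z assume "z \<in> phi (coset (nsmul (p ^ i) y0) ?Bi)"
    then obtain y where y: "nsmul (p ^ i) y - nsmul (p ^ i) y0 \<in> ?Bi" "z - nsmul (p ^ j) y \<in> ?Bj"
      unfolding phi_def by auto
    have "nsmul (p ^ j) y - nsmul (p ^ j) y0 \<in> ?Bj" using lay[OF i y(1)] .
    hence "(z - nsmul (p ^ j) y) + (nsmul (p ^ j) y - nsmul (p ^ j) y0) \<in> ?Bj"
      by (rule sg_add[OF sBj y(2)])
    thus "z \<in> coset (nsmul (p ^ j) y0) ?Bj" by simp
  next
    fix z assume "z \<in> coset (nsmul (p ^ j) y0) ?Bj"
    hence "z - nsmul (p ^ j) y0 \<in> ?Bj" by simp
    moreover have "nsmul (p ^ i) y0 \<in> coset (nsmul (p ^ i) y0) ?Bi" using sg_0[OF sBi] by simp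
    ultimately show "z \<in> phi (coset (nsmul (p ^ i) y0) ?Bi)" unfolding phi_def by blast
  qed
  show ?thesis
    unfolding qiso_def R_alt
  proof (rule exI[of _ phi], intro conjI ballI)
    show "bij_betw phi (quot (R i) ?Bi) (quot (R j) ?Bj)"
      unfolding bij_betw_def
    proof
      show "inj_on phi (quot (R i) ?Bi)"
      proof (rule inj_onI)
        fix X Y assume XQ: "X \<in> quot (R i) ?Bi" and YQ: "Y \<in> quot (R i) ?Bi" and e: "phi X = phi Y"
        obtain a where X: "X = coset (nsmul (p ^ i) a) ?Bi" using XQ unfolding quot_R by blast
        obtain b where Y: "Y = coset (nsmul (p ^ i) b) ?Bi" using YQ unfolding quot_R by blast
        have "coset (nsmul (p ^ j) a) ?Bj = coset (nsmul (p ^ j) b) ?Bj"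
          using e unfolding X Y phic .
        hence "nsmul (p ^ j) a - nsmul (p ^ j) b \<in> ?Bj" using coset_eq[OF sBj] by simp
        hence "nsmul (p ^ i) a - nsmul (p ^ i) b \<in> ?Bi" using lay[OF j] by blast
        thus "X = Y" using X Y coset_eq[OF sBi] by simp
      qed
      show "phi ` quot (R i) ?Bi = quot (R j) ?Bj"
      proof
        show "phi ` quot (R i) ?Bi \<subseteq> quot (R j) ?Bj"
        proof
          fix Z assume "Z \<in> phi ` quot (R i) ?Bi"
          then obtain X where XQ: "X \<in> quot (R i) ?Bi" and Z: "Z = phi X" by blast
          obtain a where "X = coset (nsmul (p ^ i) a) ?Bi" using XQ unfolding quot_R by blast
          hence "Z = coset (nsmul (p ^ j) a) ?Bj" using Z phic by simp
          thus "Z \<in> quot (R j) ?Bj" unfolding quot_R by blast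
        qed
        show "quot (R j) ?Bj \<subseteq> phi ` quot (R i) ?Bi"
        proof
          fix Z assume "Z \<in> quot (R j) ?Bj"
          then obtain a where "Z = coset (nsmul (p ^ j) a) ?Bj" unfolding quot_R by blast
          hence "Z = phi (coset (nsmul (p ^ i) a) ?Bi)" using phic by simp
          moreover have "coset (nsmul (p ^ i) a) ?Bi \<in> quot (R i) ?Bi" unfolding quot_R by blast
          ultimately show "Z \<in> phi ` quot (R i) ?Bi" by blast
        qed
      qed
    qed
  next
    fix X Y assume XQ: "X \<in> quot (R i) ?Bi" and YQ: "Y \<in> quot (R i) ?Bi"
    obtain a where X: "X = coset (nsmul (p ^ i) a) ?Bi" using XQ unfolding quot_R by blast
    obtain b where Y: "Y = coset (nsmul (p ^ i) b) ?Bi" using YQ unfolding quot_R by blast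
    have "qadd X Y = coset (nsmul (p ^ i) (a + b)) ?Bi" unfolding X Y qadd_coset[OF sBi] ns_plus ..
    hence "phi (qadd X Y) = coset (nsmul (p ^ j) (a + b)) ?Bj" using phic by simp
    also have "\<dots> = qadd (phi X) (phi Y)" unfolding X Y phic qadd_coset[OF sBj] ns_plus ..
    finally show "phi (qadd X Y) = qadd (phi X) (phi Y)" .
  next
    fix g X assume g: "g \<in> carrier G" and XQ: "X \<in> quot (R i) ?Bi"
    obtain a where X: "X = coset (nsmul (p ^ i) a) ?Bi" using XQ unfolding quot_R by blast
    have "act g ` X = coset (nsmul (p ^ i) (act g a)) ?Bi" unfolding X act_coset[OF g R_submod] act_ns[OF g] ..
    hence "phi (act g ` X) = coset (nsmul (p ^ j) (act g a)) ?Bj" using phic by simp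
    also have "\<dots> = act g ` phi X" unfolding X phic act_coset[OF g R_submod] act_ns[OF g] ..
    finally show "phi (act g ` X) = act g ` phi X" .
  qed
qed

end


context Crit begin

definition Gen :: "'m set \<Rightarrow> bool" where
  "Gen X \<longleftrightarrow> (\<forall>y. \<exists>c w. y = (\<Sum>x\<in>X. nsmul (c x) x) + nsmul p w)"

lemma Gen_UNIV: "Gen UNIV"
  unfolding Gen_def
proof
  fix y :: 'm
  have "(\<Sum>x\<in>UNIV. nsmul (if x = y then 1 else 0) x) = (\<Sum>x\<in>UNIV. if x = y then x else 0)"
    by (intro sum.cong refl) simp
  also have "\<dots> = y" by (simp add: sum.delta')
  finally have "(\<Sum>x\<in>UNIV. nsmul (if x = y then 1 else 0) x) = y" .
  thus "\<exists>c w. y = (\<Sum>x\<in>UNIV. nsmul (c x) x) + nsmul p w" by (metis add_0_right ns_zero)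
qed

lemma drop:
  assumes G: "Gen X" and x0: "x0 \<in> X" and fX: "finite X"
    and e: "x0 = (\<Sum>x\<in>X - {x0}. nsmul (d x) x) + nsmul p w0"
  shows "Gen (X - {x0})"
  unfolding Gen_def
proof
  fix y
  obtain c w where y: "y = (\<Sum>x\<in>X. nsmul (c x) x) + nsmul p w" using G unfolding Gen_def by blast
  have "(\<Sum>x\<in>X. nsmul (c x) x) = nsmul (c x0) x0 + (\<Sum>x\<in>X - {x0}. nsmul (c x) x)"
    using sum.remove[OF fX x0] .
  also have "nsmul (c x0) x0 = (\<Sum>x\<in>X - {x0}. nsmul (c x0 * d x) x) + nsmul p (nsmul (c x0) w0)"
    by (subst e) (simp add: ns_plus ns_sum ns_mult[symmetric] mult.commute)
  finally have "y = (\<Sum>x\<in>X - {x0}. nsmul (c x0 * d x + c x) x) + nsmul p (nsmul (c x0) w0 + w)"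
    using y by (simp add: ns_add sum.distrib ns_plus algebra_simps)
  thus "\<exists>c w. y = (\<Sum>x\<in>X - {x0}. nsmul (c x) x) + nsmul p w"
    by (intro exI[of _ "\<lambda>x. c x0 * d x + c x"] exI)
qed

definition Xb :: "'m set" where
  "Xb = (SOME X. Gen X \<and> (\<forall>Y. Gen Y \<longrightarrow> card X \<le> card Y))"

lemma Xb: "Gen Xb" "\<And>Y. Gen Y \<Longrightarrow> card Xb \<le> card Y"
proof -
  have "\<exists>n. \<exists>X. Gen X \<and> card X = n" using Gen_UNIV by blast
  then obtain n where n: "\<exists>X. Gen X \<and> card X = n" and nmin: "\<forall>m<n. \<not> (\<exists>X. Gen X \<and> card X = m)"
    using exists_least_iff[of "\<lambda>n. \<exists>X. Gen X \<and> card X = n"] by blast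
  then obtain X where "Gen X" "card X = n" by blast
  hence "Gen X \<and> (\<forall>Y. Gen Y \<longrightarrow> card X \<le> card Y)" using nmin by (metis not_le)
  hence "Gen Xb \<and> (\<forall>Y. Gen Y \<longrightarrow> card Xb \<le> card Y)" unfolding Xb_def by (rule someI)
  thus "Gen Xb" "\<And>Y. Gen Y \<Longrightarrow> card Xb \<le> card Y" by auto
qed

lemma Xb_fin: "finite Xb" by simp

lemma Xb_nodrop:
  assumes x0: "x0 \<in> Xb" and e: "x0 = (\<Sum>x\<in>Xb - {x0}. nsmul (d x) x) + nsmul p w0"
  shows False
proof -
  have "Gen (Xb - {x0})" using drop[OF Xb(1) x0 Xb_fin e] .
  hence "card Xb \<le> card (Xb - {x0})" using Xb(2) by blast
  moreover have "card (Xb - {x0}) < card Xb" using card_Diff1_less[OF Xb_fin x0] .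
  ultimately show False by simp
qed

lemma Xb_top: "x0 \<in> Xb \<Longrightarrow> nsmul (p ^ (k - 1)) x0 \<noteq> 0"
proof
  assume x0: "x0 \<in> Xb" and "nsmul (p ^ (k - 1)) x0 = 0"
  then obtain w where "x0 = nsmul p w" using core1 by blast
  hence "x0 = (\<Sum>x\<in>Xb - {x0}. nsmul 0 x) + nsmul p w" by simp
  thus False using Xb_nodrop[OF x0, of "\<lambda>_. 0" w] by simp
qed

lemma Xb_indep:
  assumes "j \<le> k"
  shows "\<forall>d. (\<Sum>x\<in>Xb. nsmul (d x) x) = 0 \<longrightarrow> (\<forall>x\<in>Xb. p ^ j dvd d x)"
  using assms
proof (induction j)
  case 0
  then show ?case by simp
next
  case (Suc j)
  show ?case
  proof (intro allI impI ballI)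
    fix d x1 assume d: "(\<Sum>x\<in>Xb. nsmul (d x) x) = 0" and x1: "x1 \<in> Xb"
    have dv: "\<forall>x\<in>Xb. p ^ j dvd d x" using Suc d by simp
    define e where "e x = d x div p ^ j" for x
    have de: "d x = p ^ j * e x" if "x \<in> Xb" for x using dv that unfolding e_def by simp
    define z where "z = (\<Sum>x\<in>Xb. nsmul (e x) x)"
    have "nsmul (p ^ j) z = (\<Sum>x\<in>Xb. nsmul (d x) x)"
      unfolding z_def ns_sum by (intro sum.cong refl) (simp add: de ns_mult)
    hence pz: "nsmul (p ^ j) z = 0" using d by simp
    have "p ^ (k - 1) = p ^ (k - 1 - j) * p ^ j" using Suc.prems by (simp add: power_add[symmetric])
    hence "nsmul (p ^ (k - 1)) z = 0" using pz by (simp add: ns_mult)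
    then obtain w where zw: "z = nsmul p w" using core1 by blast
    have "\<forall>x\<in>Xb. p dvd e x"
    proof (rule ccontr)
      assume "\<not> (\<forall>x\<in>Xb. p dvd e x)"
      then obtain x0 where x0: "x0 \<in> Xb" "\<not> p dvd e x0" by blast
      then obtain s r where sr: "s * e x0 = p * r + 1" using inv_mod_p by blast
      have "nsmul s z = nsmul (s * e x0) x0 + (\<Sum>x\<in>Xb - {x0}. nsmul (s * e x) x)"
        unfolding z_def ns_sum sum.remove[OF Xb_fin x0(1)] by (simp add: ns_mult ns_plus ns_sum)
      also have "nsmul (s * e x0) x0 = x0 + nsmul p (nsmul r x0)"
        by (simp add: sr nsSuc ns_mult)
      finally have "x0 = nsmul p (nsmul s w) - nsmul p (nsmul r x0) - (\<Sum>x\<in>Xb - {x0}. nsmul (s * e x) x)"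
        using zw by (simp add: algebra_simps ns_commute[of s p])
      also have "nsmul p (nsmul s w) - nsmul p (nsmul r x0) - (\<Sum>x\<in>Xb - {x0}. nsmul (s * e x) x)
          = (\<Sum>x\<in>Xb - {x0}. nsmul ((p ^ m - 1) * (s * e x)) x) + nsmul p (nsmul s w - nsmul r x0)"
      proof -
        define S1 where "S1 = (\<Sum>x\<in>Xb - {x0}. nsmul (s * e x) x)"
        define S2 where "S2 = (\<Sum>x\<in>Xb - {x0}. nsmul ((p ^ m - 1) * (s * e x)) x)"
        have neg: "- S1 = S2" unfolding S1_def S2_def by (simp only: sum_negf[symmetric] neg_ns)
        have "nsmul p (nsmul s w) - nsmul p (nsmul r x0) - S1 = S2 + nsmul p (nsmul s w - nsmul r x0)"
          unfolding ns_diff neg[symmetric] by (simp add: algebra_simps)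
        thus ?thesis unfolding S1_def S2_def .
      qed
      finally show False using Xb_nodrop[OF x0(1), of "\<lambda>x. (p ^ m - 1) * (s * e x)"] by blast
    qed
    hence "p dvd e x1" using x1 by blast
    thus "p ^ Suc j dvd d x1" using de[OF x1] by (simp add: mult.commute)
  qed
qed

lemma Xb_span: "\<exists>c. y = (\<Sum>x\<in>Xb. nsmul (c x) x)"
proof -
  have "\<forall>y. \<exists>c w. y = (\<Sum>x\<in>Xb. nsmul (c x) x) + nsmul (p ^ j) w" for j
  proof (induction j)
    case 0
    show ?case
    proof
      fix y :: 'm
      show "\<exists>c w. y = (\<Sum>x\<in>Xb. nsmul (c x) x) + nsmul (p ^ 0) w"
        by (rule exI[of _ "\<lambda>_. 0"], rule exI[of _ y]) simp
    qed
  next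
    case (Suc j)
    show ?case
    proof
      fix y
      obtain c w where y: "y = (\<Sum>x\<in>Xb. nsmul (c x) x) + nsmul (p ^ j) w" using Suc by blast
      obtain c' w' where w: "w = (\<Sum>x\<in>Xb. nsmul (c' x) x) + nsmul p w'" using Xb(1) unfolding Gen_def by blast
      have pw: "nsmul (p ^ j) w = (\<Sum>x\<in>Xb. nsmul (p ^ j * c' x) x) + nsmul (p ^ Suc j) w'"
        unfolding w ns_plus ns_sum by (simp add: ns_mult[symmetric] mult.commute)
      have sd: "(\<Sum>x\<in>Xb. nsmul (c x + p ^ j * c' x) x) = (\<Sum>x\<in>Xb. nsmul (c x) x) + (\<Sum>x\<in>Xb. nsmul (p ^ j * c' x) x)"
        by (simp only: ns_add sum.distrib)
      have "y = (\<Sum>x\<in>Xb. nsmul (c x + p ^ j * c' x) x) + nsmul (p ^ Suc j) w'"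
        unfolding sd using y pw by (simp add: add.assoc)
      thus "\<exists>c w. y = (\<Sum>x\<in>Xb. nsmul (c x) x) + nsmul (p ^ Suc j) w"
        by (intro exI[of _ "\<lambda>x. c x + p ^ j * c' x"] exI)
    qed
  qed
  then obtain c w where "y = (\<Sum>x\<in>Xb. nsmul (c x) x) + nsmul (p ^ k) w" by blast
  thus ?thesis using killk by auto
qed

end


lemma map2_map: "map2 f (map g xs) xs = map (\<lambda>x. f (g x) x) xs"
  by (induction xs) auto

lemma arith_eq:
  fixes a b q :: nat
  assumes "a < q" "b < q" "q dvd a + (q - b)"
  shows "a = b"
proof -
  obtain t where t: "a + (q - b) = q * t" using assms(3) by blast
  have "q * t < q * 2" using assms t by linarith
  hence "t < 2" by simp
  moreover have "q * t > 0" using assms t by linarith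
  hence "t > 0" by simp
  ultimately have "t = 1" by simp
  thus ?thesis using t assms by simp
qed

lemma ns_mod: "nsmul q x = 0 \<Longrightarrow> nsmul (c mod q) x = nsmul c x"
proof -
  assume q: "nsmul q x = 0"
  have "nsmul c x = nsmul (c mod q + (c div q) * q) x" by simp
  also have "\<dots> = nsmul (c mod q) x" by (simp only: ns_add ns_mult q ns_zero add_0_right)
  finally show ?thesis by simp
qed

context Crit begin

lemma homog_part: "homog (UNIV::'m set) (p ^ k)"
proof -
  obtain xs where xs: "distinct xs" "set xs = Xb" using finite_distinct_list[OF Xb_fin] by blast
  define n where "n = length xs"
  have kpos: "p ^ k > 0" using p_pos by simp
  have ord: "aord x = p ^ k" if x: "x \<in> Xb" for x
  proof -
    have le: "expo {x} \<le> p ^ k" unfolding expo_def by (rule Least_le) (use kpos killk in auto)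
    have "\<not> expo {x} < p ^ k"
    proof
      assume "expo {x} < p ^ k"
      hence "\<forall>y\<in>{x}. nsmul (p ^ (k - 1)) y = 0" using E1[of "{x}" k] killk by blast
      thus False using Xb_top[OF x] by simp
    qed
    thus ?thesis using le unfolding aord_def by simp
  qed
  define fc where "fc cs x = cs ! (THE i. i < n \<and> xs ! i = x)" for cs :: "nat list" and x
  have the_i: "(THE i'. i' < n \<and> xs ! i' = xs ! i) = i" if "i < n" for i
    using that xs(1) unfolding n_def by (auto intro!: the_equality simp: nth_eq_iff_index_eq)
  have fc_map: "map (fc cs) xs = cs" if "length cs = n" for cs
    by (rule nth_equalityI) (use that the_i in \<open>auto simp: fc_def n_def\<close>)
  have sumconv: "sum_list (map2 nsmul (map c xs) xs) = (\<Sum>x\<in>Xb. nsmul (c x) x)" for c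
    unfolding map2_map using sum_list_distinct_conv_sum_set[OF xs(1)] xs(2) by simp
  have fc_lt: "fc cs x < p ^ k" if "length cs = n" "\<forall>c\<in>set cs. c < p ^ k" "x \<in> Xb" for cs x
  proof -
    have "fc cs x \<in> set (map (fc cs) xs)" using that(3) xs(2) by simp
    thus ?thesis using fc_map[OF that(1)] that(2) by simp
  qed
  show ?thesis
    unfolding homog_def
  proof (intro exI conjI ballI)
    show "set xs \<subseteq> UNIV" by simp
    show "aord x = p ^ k" if "x \<in> set xs" for x using ord that xs(2) by simp
    fix y :: 'm
    obtain c where c: "y = (\<Sum>x\<in>Xb. nsmul (c x) x)" using Xb_span by blast
    show "\<exists>!cs. length cs = length xs \<and> (\<forall>c\<in>set cs. c < p ^ k) \<and> y = sum_list (map2 nsmul cs xs)"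
    proof (rule ex_ex1I)
      show "\<exists>cs. length cs = length xs \<and> (\<forall>c\<in>set cs. c < p ^ k) \<and> y = sum_list (map2 nsmul cs xs)"
      proof (intro exI conjI)
        show "length (map (\<lambda>x. c x mod p ^ k) xs) = length xs" by simp
        show "\<forall>a\<in>set (map (\<lambda>x. c x mod p ^ k) xs). a < p ^ k" using kpos by auto
        have "sum_list (map2 nsmul (map (\<lambda>x. c x mod p ^ k) xs) xs) = (\<Sum>x\<in>Xb. nsmul (c x mod p ^ k) x)"
          by (rule sumconv)
        also have "\<dots> = y" unfolding c by (intro sum.cong refl ns_mod killk)
        finally show "y = sum_list (map2 nsmul (map (\<lambda>x. c x mod p ^ k) xs) xs)" by simp
      qed
    next
      fix cs1 cs2
      assume h1: "length cs1 = length xs \<and> (\<forall>c\<in>set cs1. c < p ^ k) \<and> y = sum_list (map2 nsmul cs1 xs)"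
        and h2: "length cs2 = length xs \<and> (\<forall>c\<in>set cs2. c < p ^ k) \<and> y = sum_list (map2 nsmul cs2 xs)"
      define c1 where "c1 = fc cs1"
      define c2 where "c2 = fc cs2"
      have m1: "map c1 xs = cs1" unfolding c1_def using fc_map h1 n_def by simp
      have m2: "map c2 xs = cs2" unfolding c2_def using fc_map h2 n_def by simp
      have lt1: "c1 x < p ^ k" if "x \<in> Xb" for x unfolding c1_def using fc_lt h1 n_def that by simp
      have lt2: "c2 x < p ^ k" if "x \<in> Xb" for x unfolding c2_def using fc_lt h2 n_def that by simp
      have s1: "y = (\<Sum>x\<in>Xb. nsmul (c1 x) x)" using h1 m1 sumconv[of c1] by simp
      have s2: "y = (\<Sum>x\<in>Xb. nsmul (c2 x) x)" using h2 m2 sumconv[of c2] by simp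
      define d where "d x = c1 x + (p ^ k - c2 x)" for x
      have "(\<Sum>x\<in>Xb. nsmul (d x) x) = (\<Sum>x\<in>Xb. nsmul (c1 x) x) + (\<Sum>x\<in>Xb. nsmul (p ^ k - c2 x) x)"
        unfolding d_def by (simp only: ns_add sum.distrib)
      also have "\<dots> = (\<Sum>x\<in>Xb. nsmul (c2 x) x) + (\<Sum>x\<in>Xb. nsmul (p ^ k - c2 x) x)" using s1 s2 by simp
      also have "\<dots> = (\<Sum>x\<in>Xb. nsmul (c2 x + (p ^ k - c2 x)) x)" by (simp only: ns_add sum.distrib)
      also have "\<dots> = (\<Sum>x\<in>Xb. nsmul (p ^ k) x)" by (intro sum.cong refl) (simp add: lt2 less_imp_le)
      also have "\<dots> = 0" using killk by simp
      finally have "\<forall>x\<in>Xb. p ^ k dvd d x" using Xb_indep[of k] by simp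
      hence "c1 x = c2 x" if "x \<in> Xb" for x using arith_eq[OF lt1[OF that] lt2[OF that]] that unfolding d_def by blast
      hence "map c1 xs = map c2 xs" using xs(2) by simp
      thus "cs1 = cs2" using m1 m2 by simp
    qed
  qed
qed

end

theorem lemma1:
  fixes G :: "('g,'b) monoid_scheme"
    and act :: "'g \<Rightarrow> 'm::{ab_group_add,finite} \<Rightarrow> 'm"
    and p m :: nat
  assumes "group G" and "finite (carrier G)"
    and "prime p" and "\<not> p dvd card (carrier G)" and "m \<ge> 1"
    and "is_Gmodule G act"
    and "\<forall>x::'m. nsmul (p ^ m) x = 0"
    and "\<exists>x::'m. x \<noteq> 0"
  shows "(\<forall>k. expo (UNIV::'m set) = p ^ k \<and>
             (\<forall>N. submod G act N \<and> N \<noteq> UNIV \<longrightarrow> expo N < p ^ k) \<longrightarrow>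
           homog (UNIV::'m set) (p ^ k) \<and>
           (\<forall>i<k. qsimple G act (pM p i) (pM p (Suc i))) \<and>
           (\<forall>i<k. \<forall>j<k. qiso G act (pM p i) (pM p (Suc i)) (pM p j) (pM p (Suc j))) \<and>
           (\<forall>g\<in>carrier G. (\<forall>x\<in>(pM p (k - 1) :: 'm set). act g x = x) \<longrightarrow> (\<forall>x. act g x = x)))
       \<and> (\<not> decomposable G act \<longrightarrow>
           (\<forall>N. submod G act N \<and> N \<noteq> UNIV \<longrightarrow> expo N < expo (UNIV::'m set)))"
proof -
  interpret Gm G act p m
    using assms by (intro Gm.intro) auto
  have P1: "homog (UNIV::'m set) (p ^ k) \<and>
           (\<forall>i<k. qsimple G act (pM p i) (pM p (Suc i))) \<and>
           (\<forall>i<k. \<forall>j<k. qiso G act (pM p i) (pM p (Suc i)) (pM p j) (pM p (Suc j))) \<and>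
           (\<forall>g\<in>carrier G. (\<forall>x\<in>(pM p (k - 1) :: 'm set). act g x = x) \<longrightarrow> (\<forall>x. act g x = x))"
    if hk: "expo (UNIV::'m set) = p ^ k" and hc: "\<forall>N. submod G act N \<and> N \<noteq> UNIV \<longrightarrow> expo N < p ^ k" for k
  proof -
    have k1: "k \<ge> 1" and killk: "\<forall>x::'m. nsmul (p ^ k) x = 0"
      and top: "\<exists>x::'m. nsmul (p ^ (k - 1)) x \<noteq> 0" using E4[OF hk assms(8)] by auto
    have crit: "\<forall>N::'m set. submod G act N \<and> N \<noteq> UNIV \<longrightarrow> (\<forall>y\<in>N. nsmul (p ^ (k - 1)) y = 0)"
    proof (intro allI impI)
      fix N :: "'m set" assume "submod G act N \<and> N \<noteq> UNIV"
      hence "expo N < p ^ k" using hc by blast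
      thus "\<forall>y\<in>N. nsmul (p ^ (k - 1)) y = 0" using E1[of N k] killk by blast
    qed
    interpret Crit G act p m k
      by (rule Crit.intro[OF Gm_axioms], rule Crit_axioms.intro) (use k1 killk top crit in auto)
    show ?thesis
    proof (intro conjI allI impI ballI)
      show "homog (UNIV::'m set) (p ^ k)" by (rule homog_part)
      show "qsimple G act (pM p i) (pM p (Suc i))" if "i < k" for i using partb that .
      show "qiso G act (pM p i) (pM p (Suc i)) (pM p j) (pM p (Suc j))" if "i < k" "j < k" for i j
        using partiso that by blast
      show "act g x = x" if "g \<in> carrier G" "\<forall>x\<in>(pM p (k - 1) :: 'm set). act g x = x" for g x
        using partc[OF that(1)] that(2) unfolding pM_def by blast
    qed
  qed
  have P2: "\<not> decomposable G act \<longrightarrow>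
           (\<forall>N. submod G act N \<and> N \<noteq> UNIV \<longrightarrow> expo N < expo (UNIV::'m set))"
    using part2 assms(8) by blast
  show ?thesis using P1 P2 by blast
qed

end
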